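(* Let $\Omega\subset\mathbb{R}^3$ be a bounded domain, assume Property A (see context) with constant $\rho\in[0,1)$, and let $0\le\alpha<(1-\rho)/2$. Then for every $h\in L^\infty_\alpha$, $$|S_\Omega KS_\Omega Kh|_{\infty,\alpha}\lesssim\operatorname{diam}(\Omega)\,|h|_{\infty,\alpha}.$$
   Context: Property A: there are $\nu$ and $k$, with $Kf(x,v)=\int_{\mathbb{R}^3}k(v,v_* )f(x,v_* )dv_*$, and $\gamma\in[0,1]$, $\rho\in[0,1)$, such that $(1+|v|)^\gamma\lesssim\nu(v)\lesssim(1+|v|)^\gamma$, $|\nabla\nu|\lesssim(1+|v|)^{\gamma-1}$, $|k(v,v_* )|\lesssim\frac{E(v,v_* )}{|v-v_*|(1+|v|+|v_*|)^{1-\gamma}}$ and $|\nabla_vk(v,v_* )|\lesssim\frac{(1+|v|)E(v,v_* )}{|v-v_*|^2(1+|v|+|v_*|)^{1-\gamma}}$, where $E=\exp(-\frac{1-\rho}{4}(|v-v_*|^2+(\frac{|v|^2-|v_*|^2}{|v-v_*|})^2))$. $\tau_{x,v}=\inf\{s\ge0:x-sv\in\Omega^c\}$; $S_\Omega h(x,v)=\int_0^{\tau_{x,v}}e^{-\nu(v)s}h(x-sv,v)ds$. $|f|_{\infty,\alpha}=\operatorname{ess\,sup}_{\Omega\times\mathbb{R}^3}e^{\alpha|v|^2}|f|$, $L^\infty_\alpha=\{f:|f|_{\infty,\alpha}<\infty\}$. $a\lesssim b$: $a\le Cb$ for a constant $C\ge0$ independent of $\Omega,h$. *)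

theory Defs
  imports "HOL-Analysis.Analysis" "HOL-Probability.Essential_Supremum"
begin

type_synonym vec3 = "real^3"

text \<open>The Gaussian-type factor E(v,v_*) of Property A (meaningful for v \<noteq> v_*).\<close>
definition Efac :: "real \<Rightarrow> vec3 \<Rightarrow> vec3 \<Rightarrow> real" where
  "Efac \<rho> v w = exp (- ((1 - \<rho>) / 4) *
      ((norm (v - w))\<^sup>2 + (((norm v)\<^sup>2 - (norm w)\<^sup>2) / norm (v - w))\<^sup>2))"

definition propertyA :: "(vec3 \<Rightarrow> real) \<Rightarrow> (vec3 \<Rightarrow> vec3 \<Rightarrow> real) \<Rightarrow> real \<Rightarrow> real \<Rightarrow> bool" where
  "propertyA \<nu> k \<gamma> \<rho> \<longleftrightarrow>
     0 \<le> \<gamma> \<and> \<gamma> \<le> 1 \<and> 0 \<le> \<rho> \<and> \<rho> < 1 \<and>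
     (\<lambda>(v, w). k v w) \<in> borel_measurable lborel \<and>
     (\<exists>c C. 0 < c \<and> (\<forall>v. c * (1 + norm v) powr \<gamma> \<le> \<nu> v \<and> \<nu> v \<le> C * (1 + norm v) powr \<gamma>)) \<and>
     (\<exists>C. \<forall>v. \<exists>D. (\<nu> has_derivative D) (at v) \<and> onorm D \<le> C * (1 + norm v) powr (\<gamma> - 1)) \<and>
     (\<exists>C. \<forall>v w. v \<noteq> w \<longrightarrow>
        \<bar>k v w\<bar> \<le> C * Efac \<rho> v w / (norm (v - w) * (1 + norm v + norm w) powr (1 - \<gamma>))) \<and>
     (\<exists>C. \<forall>v w. v \<noteq> w \<longrightarrow> (\<exists>D. ((\<lambda>u. k u w) has_derivative D) (at v) \<and>
        onorm D \<le> C * (1 + norm v) * Efac \<rho> v w /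
                    ((norm (v - w))\<^sup>2 * (1 + norm v + norm w) powr (1 - \<gamma>))))"

definition Kop :: "(vec3 \<Rightarrow> vec3 \<Rightarrow> real) \<Rightarrow> (vec3 \<Rightarrow> vec3 \<Rightarrow> real) \<Rightarrow> vec3 \<Rightarrow> vec3 \<Rightarrow> real" where
  "Kop k f x v = (\<integral>w. k v w * f x w \<partial>lborel)"

definition tau :: "vec3 set \<Rightarrow> vec3 \<Rightarrow> vec3 \<Rightarrow> real" where
  "tau \<Omega> x v = Inf {s. 0 \<le> s \<and> x - s *\<^sub>R v \<notin> \<Omega>}"

definition S_op :: "vec3 set \<Rightarrow> (vec3 \<Rightarrow> real) \<Rightarrow> (vec3 \<Rightarrow> vec3 \<Rightarrow> real) \<Rightarrow> vec3 \<Rightarrow> vec3 \<Rightarrow> real" where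
  "S_op \<Omega> \<nu> h x v = (LINT s:{0..tau \<Omega> x v}|lborel. exp (- \<nu> v * s) * h (x - s *\<^sub>R v) v)"

definition wnorm :: "vec3 set \<Rightarrow> real \<Rightarrow> (vec3 \<Rightarrow> vec3 \<Rightarrow> real) \<Rightarrow> ereal" where
  "wnorm \<Omega> \<alpha> f = esssup (restrict_space lborel (\<Omega> \<times> UNIV))
      (\<lambda>(x, v). ereal (exp (\<alpha> * (norm v)\<^sup>2) * \<bar>f x v\<bar>))"

end

theory Submission
  imports Defs "HOL-Probability.Distributions"
begin


lemma gauss_fin:
  fixes d :: real assumes "d > 0"
  shows "integrable lborel (\<lambda>t. exp (- d * t\<^sup>2))"
proof -
  define \<sigma> where "\<sigma> = 1 / sqrt (2 * d)"
  have s: "\<sigma> > 0" using assms by (simp add: \<sigma>_def)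
  have ss: "2 * \<sigma>\<^sup>2 = 1 / d" using assms by (simp add: \<sigma>_def power_divide)
  have "(\<lambda>t. exp (- d * t\<^sup>2)) = (\<lambda>t. sqrt (2 * pi * \<sigma>\<^sup>2) * normal_density 0 \<sigma> t)"
    using s assms by (auto simp: normal_density_def ss field_simps)
  then show ?thesis using integrable_normal_density[OF s] by simp
qed

lemma sing_fin:
  fixes p :: real assumes "0 \<le> p" "p < 1"
  shows "(\<integral>\<^sup>+t. ennreal (indicator {-1..1} t * \<bar>t\<bar> powr (-p)) \<partial>lborel) < \<infinity>"
proof -
  have h: "((\<lambda>x. x powr (-p)) has_integral (1 powr (-p+1) / (-p+1))) {0..1}"
    by (rule has_integral_powr_from_0) (use assms in auto)
  have A: "(\<integral>\<^sup>+t. ennreal (indicator {0..1} t * t powr (-p)) \<partial>lborel) = ennreal (1 / (1 - p))"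
    using nn_integral_has_integral_lebesgue[OF _ h] by simp
  have B: "(\<integral>\<^sup>+t. ennreal (indicator {0..1} (-t) * (-t) powr (-p)) \<partial>lborel) = ennreal (1 / (1 - p))"
  proof -
    have "(\<integral>\<^sup>+t. ennreal (indicator {0..1} t * t powr (-p)) \<partial>lborel)
        = ennreal \<bar>-1::real\<bar> * (\<integral>\<^sup>+t. ennreal (indicator {0..1} (0 + -1 * t) * (0 + -1 * t) powr (-p)) \<partial>lborel)"
      by (rule nn_integral_real_affine) auto
    then show ?thesis using A by simp
  qed
  have "(\<integral>\<^sup>+t. ennreal (indicator {-1..1} t * \<bar>t\<bar> powr (-p)) \<partial>lborel)
     \<le> (\<integral>\<^sup>+t. ennreal (indicator {0..1} t * t powr (-p)) + ennreal (indicator {0..1} (-t) * (-t) powr (-p)) \<partial>lborel)"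
    by (intro nn_integral_mono) (auto simp: indicator_def ennreal_plus[symmetric] simp del: ennreal_plus)
  also have "\<dots> = ennreal (1 / (1 - p)) + ennreal (1 / (1 - p))"
    by (subst nn_integral_add) (auto simp: A B)
  also have "\<dots> < \<infinity>" by simp
  finally show ?thesis .
qed

definition Phi :: "real \<Rightarrow> real \<Rightarrow> real" where
  "Phi d t = indicator {-1..1} t * \<bar>t\<bar> powr (-2/3) + exp (- d * t\<^sup>2)"

lemma Phi_nonneg: "0 \<le> Phi d t" by (simp add: Phi_def)

lemma Phi_ge1: assumes "t \<noteq> 0" "0 \<le> q" "q \<le> 2" "0 \<le> d"
  shows "\<bar>t\<bar> powr (-q/3) * exp (- d * t\<^sup>2) \<le> Phi d t"
proof (cases "\<bar>t\<bar> \<le> 1")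
  case True
  have a: "\<bar>t\<bar> powr (-q/3) \<le> \<bar>t\<bar> powr (-2/3)"
    using True assms by (intro powr_mono') auto
  have b: "exp (- d * t\<^sup>2) \<le> 1" using assms by simp
  have "\<bar>t\<bar> powr (-q/3) * exp (- d * t\<^sup>2) \<le> \<bar>t\<bar> powr (-2/3) * 1"
    using a b by (intro mult_mono) auto
  moreover have "indicator {-1..1} t = (1::real)" using True by (auto simp: indicator_def abs_le_iff)
  ultimately show ?thesis by (simp add: Phi_def add_increasing2)
next
  case False
  have a: "\<bar>t\<bar> powr (-q/3) \<le> 1" using False assms powr_mono[of "-q/3" 0 "\<bar>t\<bar>"] by auto
  have "\<bar>t\<bar> powr (-q/3) * exp (- d * t\<^sup>2) \<le> 1 * exp (- d * t\<^sup>2)"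
    using a by (intro mult_right_mono) auto
  moreover have "0 \<le> indicator {-1..1} t * \<bar>t\<bar> powr (-2/3)" by simp
  ultimately show ?thesis unfolding Phi_def by linarith
qed

lemma Phi_ge2: assumes "t \<noteq> 0" "\<bar>t\<bar> \<le> 1"
  shows "\<bar>t\<bar> powr (-2/3) \<le> Phi d t"
proof -
  have "indicator {-1..1} t = (1::real)" using assms by (auto simp: indicator_def abs_le_iff)
  then show ?thesis by (simp add: Phi_def add_increasing2)
qed

lemma norm_powr_le_prod:
  fixes \<eta> :: vec3 assumes nz: "\<forall>b\<in>Basis. \<eta> \<bullet> b \<noteq> 0" and q: "0 \<le> q"
  shows "norm \<eta> powr (-q) \<le> (\<Prod>b\<in>Basis. \<bar>\<eta> \<bullet> b\<bar> powr (-q/3))"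
proof -
  have cb: "card (Basis :: vec3 set) = 3" by simp
  have pos: "0 < (\<Prod>b\<in>(Basis::vec3 set). \<bar>\<eta> \<bullet> b\<bar>)" using nz by (intro prod_pos) auto
  have "(\<Prod>b\<in>(Basis::vec3 set). \<bar>\<eta> \<bullet> b\<bar>) \<le> (\<Prod>b\<in>(Basis::vec3 set). norm \<eta>)"
    by (intro prod_mono) (auto simp: Basis_le_norm)
  also have "\<dots> = norm \<eta> ^ 3" using cb by simp
  finally have le: "(\<Prod>b\<in>(Basis::vec3 set). \<bar>\<eta> \<bullet> b\<bar>) \<le> norm \<eta> powr 3"
    by (simp add: powr_realpow)
  have npos: "norm \<eta> > 0" using nz by (auto)
  have "norm \<eta> powr (-q) = norm \<eta> powr (3 * (-q/3))" by simp
  also have "\<dots> = (norm \<eta> powr 3) powr (-q/3)" by (rule powr_powr[symmetric])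
  also have "\<dots> \<le> (\<Prod>b\<in>(Basis::vec3 set). \<bar>\<eta> \<bullet> b\<bar>) powr (-q/3)"
    using pos le q by (intro powr_mono2') auto
  also have "\<dots> = (\<Prod>b\<in>Basis. \<bar>\<eta> \<bullet> b\<bar> powr (-q/3))"
    by (rule prod_powr_distrib)
  finally show ?thesis .
qed

lemma exp_norm_prod:
  fixes \<eta> :: vec3
  shows "exp (- d * (norm \<eta>)\<^sup>2) = (\<Prod>b\<in>Basis. exp (- d * (\<eta> \<bullet> b)\<^sup>2))"
proof -
  have "(norm \<eta>)\<^sup>2 = (\<Sum>b\<in>Basis. (\<eta> \<bullet> b)\<^sup>2)"
    unfolding power2_norm_eq_inner by (subst euclidean_inner) (simp add: power2_eq_square)
  then show ?thesis by (simp add: sum_distrib_left exp_sum[symmetric])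
qed


lemma Phi_meas[measurable]: "Phi d \<in> borel_measurable borel"
  unfolding Phi_def by measurable

lemma Phi_int_fin: assumes "d > 0" shows "(\<integral>\<^sup>+t. ennreal (Phi d t) \<partial>lborel) < \<infinity>"
proof -
  have g: "(\<integral>\<^sup>+t. ennreal (norm (exp (- d * t\<^sup>2))) \<partial>lborel) < \<infinity>"
    using gauss_fin[OF assms] by (simp add: integrable_iff_bounded)
  have "(\<integral>\<^sup>+t. ennreal (Phi d t) \<partial>lborel) = (\<integral>\<^sup>+t. ennreal (indicator {-1..1} t * \<bar>t\<bar> powr (-(2/3))) + ennreal (exp (- d * t\<^sup>2)) \<partial>lborel)"
    by (intro nn_integral_cong) (simp add: Phi_def ennreal_plus[symmetric] del: ennreal_plus)
  also have "\<dots> = (\<integral>\<^sup>+t. ennreal (indicator {-1..1} t * \<bar>t\<bar> powr (-(2/3))) \<partial>lborel) + (\<integral>\<^sup>+t. ennreal (exp (- d * t\<^sup>2)) \<partial>lborel)"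
    by (rule nn_integral_add) auto
  also have "\<dots> < \<infinity>" using g sing_fin[of "2/3"] by (simp add: less_top[symmetric])
  finally show ?thesis .
qed

lemma Phi_prod_int:
  fixes v :: vec3
  shows "(\<integral>\<^sup>+w. ennreal (\<Prod>b\<in>Basis. Phi d (v \<bullet> b - w \<bullet> b)) \<partial>lborel) = (\<integral>\<^sup>+t. ennreal (Phi d t) \<partial>lborel) ^ 3"
proof -
  have "(\<integral>\<^sup>+w. ennreal (\<Prod>b\<in>Basis. Phi d (v \<bullet> b - w \<bullet> b)) \<partial>lborel)
      = (\<integral>\<^sup>+w. (\<Prod>b\<in>(Basis::vec3 set). (\<lambda>b s. ennreal (Phi d (v \<bullet> b - s))) b (w \<bullet> b)) \<partial>lborel)"
    by (intro nn_integral_cong) (simp add: prod_ennreal Phi_nonneg)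
  also have "\<dots> = (\<Prod>b\<in>(Basis::vec3 set). (\<integral>\<^sup>+s. ennreal (Phi d (v \<bullet> b - s)) \<partial>lborel))"
    by (rule nn_integral_lborel_prod) auto
  also have "\<dots> = (\<Prod>b\<in>(Basis::vec3 set). (\<integral>\<^sup>+t. ennreal (Phi d t) \<partial>lborel))"
  proof (intro prod.cong refl)
    fix b :: vec3
    have "(\<integral>\<^sup>+t. ennreal (Phi d t) \<partial>lborel) = ennreal \<bar>-1::real\<bar> * (\<integral>\<^sup>+s. ennreal (Phi d (v \<bullet> b + -1 * s)) \<partial>lborel)"
      by (rule nn_integral_real_affine) auto
    then show "(\<integral>\<^sup>+s. ennreal (Phi d (v \<bullet> b - s)) \<partial>lborel) = (\<integral>\<^sup>+t. ennreal (Phi d t) \<partial>lborel)"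
      by simp
  qed
  also have "\<dots> = (\<integral>\<^sup>+t. ennreal (Phi d t) \<partial>lborel) ^ 3" by simp
  finally show ?thesis .
qed


lemma AE_hyper:
  fixes c :: "vec3 \<Rightarrow> real"
  shows "AE w in lborel. \<forall>b\<in>Basis. w \<bullet> b \<noteq> c b"
proof -
  have "AE w in lborel. w \<bullet> b0 \<noteq> c b0" if b0: "b0 \<in> Basis" for b0 :: vec3
  proof -
    have "emeasure lborel {w::vec3. w \<bullet> b0 = c b0} = (\<integral>\<^sup>+w. indicator {w::vec3. w \<bullet> b0 = c b0} w \<partial>lborel)"
      by (rule nn_integral_indicator[symmetric]) measurable
    also have "\<dots> = (\<integral>\<^sup>+w. (\<Prod>b\<in>(Basis::vec3 set). (\<lambda>b s. if b = b0 then indicator {c b0} s else 1::ennreal) b (w \<bullet> b)) \<partial>lborel)"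
      using b0 by (intro nn_integral_cong) (simp add: prod.delta indicator_def)
    also have "\<dots> = (\<Prod>b\<in>(Basis::vec3 set). (\<integral>\<^sup>+s. (if b = b0 then indicator {c b0} s else 1::ennreal) \<partial>lborel))"
      by (rule nn_integral_lborel_prod) auto
    also have "\<dots> = 0"
      using b0 by (intro prod_zero bexI[of _ b0]) auto
    finally have "{w::vec3. w \<bullet> b0 = c b0} \<in> null_sets lborel" by (auto simp: null_sets_def)
    then show ?thesis by (rule AE_I'[THEN eventually_mono]) auto
  qed
  then show ?thesis by (subst AE_finite_all) auto
qed

lemma pw_bound:
  fixes \<eta> :: vec3 assumes nz: "\<forall>b\<in>Basis. \<eta> \<bullet> b \<noteq> 0" and q: "0 \<le> q" "q \<le> 2" and d: "0 \<le> d"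
  shows "exp (- d * (norm \<eta>)\<^sup>2) * norm \<eta> powr (-q) \<le> (\<Prod>b\<in>Basis. Phi d (\<eta> \<bullet> b))"
proof -
  have "exp (- d * (norm \<eta>)\<^sup>2) * norm \<eta> powr (-q) \<le> (\<Prod>b\<in>Basis. exp (- d * (\<eta> \<bullet> b)\<^sup>2)) * (\<Prod>b\<in>Basis. \<bar>\<eta> \<bullet> b\<bar> powr (-q/3))"
    unfolding exp_norm_prod[of d \<eta>] using norm_powr_le_prod[OF nz q(1)]
    by (intro mult_left_mono) (auto intro: prod_nonneg)
  also have "\<dots> = (\<Prod>b\<in>Basis. \<bar>\<eta> \<bullet> b\<bar> powr (-q/3) * exp (- d * (\<eta> \<bullet> b)\<^sup>2))"
    by (simp add: prod.distrib mult.commute)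
  also have "\<dots> \<le> (\<Prod>b\<in>Basis. Phi d (\<eta> \<bullet> b))"
    using nz q d Phi_ge1[of _ q d] by (intro prod_mono) (auto simp: Phi_nonneg)
  finally show ?thesis .
qed


lemma exp_le_prod:
  fixes \<eta> :: vec3
  shows "exp (- d * (norm \<eta>)\<^sup>2) \<le> (\<Prod>b\<in>Basis. Phi d (\<eta> \<bullet> b))"
  unfolding exp_norm_prod[of d \<eta>]
  by (intro prod_mono) (auto simp: Phi_def)

lemma G_q:
  fixes v :: vec3 assumes q: "0 \<le> q" "q \<le> 2" and d: "0 \<le> d"
  shows "(\<integral>\<^sup>+w. ennreal (exp (- d * (norm (v - w))\<^sup>2) * norm (v - w) powr (-q)) \<partial>lborel)
     \<le> (\<integral>\<^sup>+t. ennreal (Phi d t) \<partial>lborel) ^ 3"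
proof -
  have "(\<integral>\<^sup>+w. ennreal (exp (- d * (norm (v - w))\<^sup>2) * norm (v - w) powr (-q)) \<partial>lborel)
     \<le> (\<integral>\<^sup>+w. ennreal (\<Prod>b\<in>Basis. Phi d (v \<bullet> b - w \<bullet> b)) \<partial>lborel)"
  proof (intro nn_integral_mono_AE)
    show "AE w in lborel. ennreal (exp (- d * (norm (v - w))\<^sup>2) * norm (v - w) powr (-q))
       \<le> ennreal (\<Prod>b\<in>Basis. Phi d (v \<bullet> b - w \<bullet> b))"
      using AE_hyper[of "\<lambda>b. v \<bullet> b"]
    proof (rule eventually_mono)
      fix w :: vec3 assume "\<forall>b\<in>Basis. w \<bullet> b \<noteq> v \<bullet> b"
      then have "\<forall>b\<in>Basis. (v - w) \<bullet> b \<noteq> 0" by (auto simp: inner_diff_left)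
      from pw_bound[OF this q d] show "ennreal (exp (- d * (norm (v - w))\<^sup>2) * norm (v - w) powr (-q))
       \<le> ennreal (\<Prod>b\<in>Basis. Phi d (v \<bullet> b - w \<bullet> b))"
        by (intro ennreal_leI) (simp add: inner_diff_left)
    qed
  qed
  also have "\<dots> = (\<integral>\<^sup>+t. ennreal (Phi d t) \<partial>lborel) ^ 3" by (rule Phi_prod_int)
  finally show ?thesis .
qed

lemma G3:
  fixes v :: vec3 assumes d: "0 \<le> d"
  shows "(\<integral>\<^sup>+w. ennreal (exp (- d * (norm (v - w))\<^sup>2) * norm w powr (-2)) \<partial>lborel)
     \<le> 2 * (\<integral>\<^sup>+t. ennreal (Phi d t) \<partial>lborel) ^ 3"
proof -
  have "(\<integral>\<^sup>+w. ennreal (exp (- d * (norm (v - w))\<^sup>2) * norm w powr (-2)) \<partial>lborel)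
     \<le> (\<integral>\<^sup>+w. ennreal (\<Prod>b\<in>Basis. Phi d (0 \<bullet> b - w \<bullet> b)) + ennreal (\<Prod>b\<in>Basis. Phi d (v \<bullet> b - w \<bullet> b)) \<partial>lborel)"
  proof (intro nn_integral_mono_AE)
    show "AE w in lborel. ennreal (exp (- d * (norm (v - w))\<^sup>2) * norm w powr (-2))
       \<le> ennreal (\<Prod>b\<in>Basis. Phi d (0 \<bullet> b - w \<bullet> b)) + ennreal (\<Prod>b\<in>Basis. Phi d (v \<bullet> b - w \<bullet> b))"
      using AE_hyper[of "\<lambda>b. 0"]
    proof (rule eventually_mono)
      fix w :: vec3 assume nz: "\<forall>b\<in>Basis. w \<bullet> b \<noteq> 0"
      have p1: "0 \<le> (\<Prod>b\<in>(Basis::vec3 set). Phi d (0 \<bullet> b - w \<bullet> b))" by (intro prod_nonneg) (simp add: Phi_nonneg)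
      have p2: "0 \<le> (\<Prod>b\<in>(Basis::vec3 set). Phi d (v \<bullet> b - w \<bullet> b))" by (intro prod_nonneg) (simp add: Phi_nonneg)
      have "exp (- d * (norm (v - w))\<^sup>2) * norm w powr (-2)
         \<le> (\<Prod>b\<in>Basis. Phi d (0 \<bullet> b - w \<bullet> b)) + (\<Prod>b\<in>Basis. Phi d (v \<bullet> b - w \<bullet> b))"
      proof (cases "norm w \<le> 1")
        case True
        have "exp (- d * (norm (v - w))\<^sup>2) * norm w powr (-2) \<le> 1 * norm w powr (-2)"
          using d by (intro mult_right_mono) auto
        also have "\<dots> \<le> (\<Prod>b\<in>Basis. \<bar>w \<bullet> b\<bar> powr (-2/3))"
          using norm_powr_le_prod[OF nz, of 2] by simp
        also have "\<dots> \<le> (\<Prod>b\<in>Basis. Phi d (0 \<bullet> b - w \<bullet> b))"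
        proof (intro prod_mono conjI)
          fix b :: vec3 assume b: "b \<in> Basis"
          have "\<bar>w \<bullet> b\<bar> \<le> 1" using True Basis_le_norm[OF b, of w] by simp
          then show "\<bar>w \<bullet> b\<bar> powr (-2/3) \<le> Phi d (0 \<bullet> b - w \<bullet> b)"
            using Phi_ge2[of "- (w \<bullet> b)" d] nz b by simp
        qed simp
        finally show ?thesis using p2 by linarith
      next
        case False
        have "norm w powr (-2) \<le> 1" using False powr_mono[of "-2" 0 "norm w"] by (auto split: if_splits)
        then have "exp (- d * (norm (v - w))\<^sup>2) * norm w powr (-2) \<le> exp (- d * (norm (v - w))\<^sup>2) * 1"
          by (intro mult_left_mono) auto
        also have "\<dots> \<le> (\<Prod>b\<in>Basis. Phi d ((v - w) \<bullet> b))" using exp_le_prod by simp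
        finally show ?thesis using p1 by (simp add: inner_diff_left)
      qed
      then show "ennreal (exp (- d * (norm (v - w))\<^sup>2) * norm w powr (-2))
       \<le> ennreal (\<Prod>b\<in>Basis. Phi d (0 \<bullet> b - w \<bullet> b)) + ennreal (\<Prod>b\<in>Basis. Phi d (v \<bullet> b - w \<bullet> b))"
        using p1 p2 by (simp add: ennreal_plus[symmetric] del: ennreal_plus)
    qed
  qed
  also have "\<dots> = (\<integral>\<^sup>+w. ennreal (\<Prod>b\<in>Basis. Phi d ((0::vec3) \<bullet> b - w \<bullet> b)) \<partial>lborel) + (\<integral>\<^sup>+w. ennreal (\<Prod>b\<in>Basis. Phi d (v \<bullet> b - w \<bullet> b)) \<partial>lborel)"
    by (rule nn_integral_add) auto
  also have "\<dots> = 2 * (\<integral>\<^sup>+t. ennreal (Phi d t) \<partial>lborel) ^ 3"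
    unfolding Phi_prod_int by (simp add: mult_2)
  finally show ?thesis .
qed



lemma abs_integral_le_nn:
  fixes f g :: "'a \<Rightarrow> real"
  assumes "AE x in M. \<bar>f x\<bar> \<le> g x" and "(\<integral>\<^sup>+x. ennreal (g x) \<partial>M) \<le> ennreal c" and "0 \<le> c"
  shows "\<bar>integral\<^sup>L M f\<bar> \<le> c"
proof (cases "integrable M f")
  case True
  have "\<bar>integral\<^sup>L M f\<bar> \<le> integral\<^sup>L M (\<lambda>x. \<bar>f x\<bar>)"
    using integral_norm_bound[of M f] by simp
  moreover have "ennreal (integral\<^sup>L M (\<lambda>x. \<bar>f x\<bar>)) = (\<integral>\<^sup>+x. ennreal \<bar>f x\<bar> \<partial>M)"
    using True by (intro nn_integral_eq_integral[symmetric]) auto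
  moreover have "(\<integral>\<^sup>+x. ennreal \<bar>f x\<bar> \<partial>M) \<le> (\<integral>\<^sup>+x. ennreal (g x) \<partial>M)"
    using assms(1) by (intro nn_integral_mono_AE) (auto elim!: eventually_mono intro: ennreal_leI)
  ultimately have "ennreal (integral\<^sup>L M (\<lambda>x. \<bar>f x\<bar>)) \<le> ennreal c" using assms(2) by simp
  then have "integral\<^sup>L M (\<lambda>x. \<bar>f x\<bar>) \<le> c" using assms(3) by simp
  with \<open>\<bar>integral\<^sup>L M f\<bar> \<le> _\<close> show ?thesis by linarith
next
  case False
  then show ?thesis using assms(3) by (simp add: not_integrable_integral_eq)
qed

lemma exp_int:
  fixes a T :: real assumes "0 < a" "0 \<le> T"
  shows "(\<integral>\<^sup>+s. ennreal (indicator {0..T} s * exp (- a * s)) \<partial>lborel) = ennreal ((1 - exp (- a * T)) / a)"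
proof -
  have "((\<lambda>s. exp (- a * s)) has_integral ((\<lambda>s. - exp (- a * s) / a) T - (\<lambda>s. - exp (- a * s) / a) 0)) {0..T}"
  proof (rule fundamental_theorem_of_calculus)
    fix x :: real assume "x \<in> {0..T}"
    have "((\<lambda>s. - exp (- a * s) / a) has_real_derivative (- (exp (- a * x) * (- a)) / a)) (at x within {0..T})"
      using assms by (intro derivative_eq_intros) auto
    moreover have "- (exp (- a * x) * (- a)) / a = exp (- a * x)" using assms by simp
    ultimately show "((\<lambda>s. - exp (- a * s) / a) has_vector_derivative exp (- a * x)) (at x within {0..T})"
      by (simp add: has_real_derivative_iff_has_vector_derivative)
  qed (use assms in auto)
  then have "((\<lambda>s. exp (- a * s)) has_integral ((1 - exp (- a * T)) / a)) {0..T}"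
    using assms by (simp add: field_simps)
  from nn_integral_has_integral_lebesgue[OF _ this] show ?thesis by simp
qed

lemma S_step:
  fixes g :: "vec3 \<Rightarrow> vec3 \<Rightarrow> real"
  assumes T: "0 \<le> tau \<Omega> x v" and nu: "0 < \<nu> v" and B: "0 \<le> B"
    and AEg: "AE s in lborel. 0 \<le> s \<and> s < tau \<Omega> x v \<longrightarrow> \<bar>g (x - s *\<^sub>R v) v\<bar> \<le> B"
  shows "\<bar>S_op \<Omega> \<nu> g x v\<bar> \<le> B * min (tau \<Omega> x v) (1 / \<nu> v)"
proof -
  define T where "T = tau \<Omega> x v"
  have "\<bar>S_op \<Omega> \<nu> g x v\<bar> \<le> B * ((1 - exp (- \<nu> v * T)) / \<nu> v)"
    unfolding S_op_def set_lebesgue_integral_def T_def[symmetric]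
  proof (rule abs_integral_le_nn)
    show "AE s in lborel. \<bar>indicator {0..T} s *\<^sub>R (exp (- \<nu> v * s) * g (x - s *\<^sub>R v) v)\<bar>
          \<le> B * (indicator {0..T} s * exp (- \<nu> v * s))"
      using AEg AE_lborel_singleton[of T]
    proof eventually_elim
      case (elim s)
      show ?case
      proof (cases "s \<in> {0..T}")
        case True
        then have gB: "\<bar>g (x - s *\<^sub>R v) v\<bar> \<le> B" using elim by (auto simp: T_def)
        have "\<bar>indicator {0..T} s *\<^sub>R (exp (- \<nu> v * s) * g (x - s *\<^sub>R v) v)\<bar> = exp (- \<nu> v * s) * \<bar>g (x - s *\<^sub>R v) v\<bar>"
          using True by (simp add: abs_mult)
        also have "\<dots> \<le> exp (- \<nu> v * s) * B" using gB by (rule mult_left_mono) auto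
        finally show ?thesis using True by (simp add: mult.commute)
      qed simp
    qed
    have "(\<integral>\<^sup>+s. ennreal (B * (indicator {0..T} s * exp (- \<nu> v * s))) \<partial>lborel)
        = ennreal B * (\<integral>\<^sup>+s. ennreal (indicator {0..T} s * exp (- \<nu> v * s)) \<partial>lborel)"
      using B by (subst nn_integral_cmult[symmetric]) (auto simp: ennreal_mult)
    also have "\<dots> = ennreal (B * ((1 - exp (- \<nu> v * T)) / \<nu> v))"
    proof -
      have "0 \<le> (1 - exp (- \<nu> v * T)) / \<nu> v" using nu T by (auto simp: T_def)
      then show ?thesis using exp_int[OF nu, of T] T B nu by (simp add: T_def ennreal_mult[symmetric])
    qed
    finally show "(\<integral>\<^sup>+s. ennreal (B * (indicator {0..T} s * exp (- \<nu> v * s))) \<partial>lborel)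
        \<le> ennreal (B * ((1 - exp (- \<nu> v * T)) / \<nu> v))" by simp
    show "0 \<le> B * ((1 - exp (- \<nu> v * T)) / \<nu> v)" using B nu T by (auto simp: T_def)
  qed
  moreover have "(1 - exp (- \<nu> v * T)) / \<nu> v \<le> T"
  proof -
    have "1 - \<nu> v * T \<le> exp (- \<nu> v * T)" using exp_ge_add_one_self[of "- \<nu> v * T"] by simp
    then show ?thesis using nu by (simp add: divide_le_eq mult.commute)
  qed
  moreover have "(1 - exp (- \<nu> v * T)) / \<nu> v \<le> 1 / \<nu> v"
    using nu by (intro divide_right_mono) auto
  ultimately have "(1 - exp (- \<nu> v * T)) / \<nu> v \<le> min T (1 / \<nu> v)"
    and "\<bar>S_op \<Omega> \<nu> g x v\<bar> \<le> B * ((1 - exp (- \<nu> v * T)) / \<nu> v)" by auto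
  then show ?thesis using B unfolding T_def
    using mult_left_mono order_trans by blast
qed



lemma E_est:
  fixes v w :: vec3
  assumes vw: "v \<noteq> w" and a: "0 \<le> \<alpha>" and r: "\<rho> < 1" and ar: "\<alpha> < (1 - \<rho>) / 2"
    and bd: "\<beta> = (1 - \<rho>) / 4" "d = \<beta> - \<alpha>\<^sup>2 / (4 * \<beta>)"
  shows "Efac \<rho> v w * exp (- \<alpha> * (norm w)\<^sup>2) \<le> exp (- d * (norm (v - w))\<^sup>2) * exp (- \<alpha> * (norm v)\<^sup>2)"
proof -
  define n where "n = norm (v - w)"
  define t where "t = ((norm v)\<^sup>2 - (norm w)\<^sup>2) / n"
  have n: "n > 0" using vw by (simp add: n_def)
  have b: "\<beta> > 0" using r bd by simp
  have D: "(norm v)\<^sup>2 - (norm w)\<^sup>2 = t * n" using n by (simp add: t_def)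
  have key: "- \<beta> * (n\<^sup>2 + t\<^sup>2) - \<alpha> * (norm w)\<^sup>2 \<le> - d * n\<^sup>2 - \<alpha> * (norm v)\<^sup>2"
  proof -
    have eq: "(- d * n\<^sup>2 - \<alpha> * (norm v)\<^sup>2) - (- \<beta> * (n\<^sup>2 + t\<^sup>2) - \<alpha> * (norm w)\<^sup>2)
        = (\<alpha> * n - 2 * \<beta> * t)\<^sup>2 / (4 * \<beta>)"
    proof -
      have "(- d * n\<^sup>2 - \<alpha> * (norm v)\<^sup>2) - (- \<beta> * (n\<^sup>2 + t\<^sup>2) - \<alpha> * (norm w)\<^sup>2)
          = - d * n\<^sup>2 + \<beta> * (n\<^sup>2 + t\<^sup>2) - \<alpha> * ((norm v)\<^sup>2 - (norm w)\<^sup>2)" by (simp add: algebra_simps)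
      also have "\<dots> = - d * n\<^sup>2 + \<beta> * (n\<^sup>2 + t\<^sup>2) - \<alpha> * (t * n)" by (simp add: D)
      also have "\<dots> = (\<alpha> * n - 2 * \<beta> * t)\<^sup>2 / (4 * \<beta>)"
        using b unfolding bd(2) by (simp add: field_simps power2_eq_square)
      finally show ?thesis .
    qed
    have "0 \<le> (\<alpha> * n - 2 * \<beta> * t)\<^sup>2 / (4 * \<beta>)" using b by simp
    then show ?thesis using eq bd(1) by linarith
  qed
  have E: "Efac \<rho> v w = exp (- \<beta> * (n\<^sup>2 + t\<^sup>2))"
    unfolding Efac_def n_def[symmetric] t_def[symmetric] bd(1) ..
  have "Efac \<rho> v w * exp (- \<alpha> * (norm w)\<^sup>2) = exp (- \<beta> * (n\<^sup>2 + t\<^sup>2) + - \<alpha> * (norm w)\<^sup>2)"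
    unfolding E exp_add ..
  also have "\<dots> \<le> exp (- d * n\<^sup>2 + - \<alpha> * (norm v)\<^sup>2)" using key by simp
  also have "\<dots> = exp (- d * (norm (v - w))\<^sup>2) * exp (- \<alpha> * (norm v)\<^sup>2)"
    unfolding exp_add n_def ..
  finally show ?thesis .
qed


lemma k_est:
  fixes v w :: vec3
  assumes vw: "v \<noteq> w" and a: "0 \<le> \<alpha>" and r: "\<rho> < 1" and ar: "\<alpha> < (1 - \<rho>) / 2"
    and bd: "\<beta> = (1 - \<rho>) / 4" "d = \<beta> - \<alpha>\<^sup>2 / (4 * \<beta>)"
    and g: "\<gamma> \<le> 1" and C: "0 \<le> Ck"
    and hk: "\<bar>k v w\<bar> \<le> Ck * Efac \<rho> v w / (norm (v - w) * (1 + norm v + norm w) powr (1 - \<gamma>))"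
  shows "\<bar>k v w\<bar> * exp (- \<alpha> * (norm w)\<^sup>2)
     \<le> Ck * exp (- \<alpha> * (norm v)\<^sup>2) * (exp (- d * (norm (v - w))\<^sup>2) * norm (v - w) powr (-1))"
proof -
  have n: "norm (v - w) > 0" using vw by simp
  have p1: "1 \<le> (1 + norm v + norm w) powr (1 - \<gamma>)" using g by (intro ge_one_powr_ge_zero) auto
  have E0: "0 \<le> Efac \<rho> v w" by (simp add: Efac_def)
  have "Ck * Efac \<rho> v w / (norm (v - w) * (1 + norm v + norm w) powr (1 - \<gamma>)) \<le> Ck * Efac \<rho> v w / (norm (v - w) * 1)"
    using p1 n C E0 by (intro divide_left_mono mult_left_mono mult_nonneg_nonneg mult_pos_pos) auto
  with hk have hk': "\<bar>k v w\<bar> \<le> Ck * Efac \<rho> v w / norm (v - w)" by simp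
  have "\<bar>k v w\<bar> * exp (- \<alpha> * (norm w)\<^sup>2) \<le> Ck * Efac \<rho> v w / norm (v - w) * exp (- \<alpha> * (norm w)\<^sup>2)"
    using hk' by (intro mult_right_mono) auto
  also have "\<dots> = Ck / norm (v - w) * (Efac \<rho> v w * exp (- \<alpha> * (norm w)\<^sup>2))" by simp
  also have "\<dots> \<le> Ck / norm (v - w) * (exp (- d * (norm (v - w))\<^sup>2) * exp (- \<alpha> * (norm v)\<^sup>2))"
    using E_est[OF vw a r ar bd] C n by (intro mult_left_mono) auto
  also have "\<dots> = Ck * exp (- \<alpha> * (norm v)\<^sup>2) * (exp (- d * (norm (v - w))\<^sup>2) * norm (v - w) powr (-1))"
    using n by (simp add: powr_minus_divide field_simps)
  finally show ?thesis .
qed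

lemma KE1:
  fixes v :: vec3
  assumes a: "0 \<le> \<alpha>" and r: "\<rho> < 1" and ar: "\<alpha> < (1 - \<rho>) / 2"
    and bd: "\<beta> = (1 - \<rho>) / 4" "d = \<beta> - \<alpha>\<^sup>2 / (4 * \<beta>)" and d0: "0 \<le> d"
    and g: "\<gamma> \<le> 1" and C: "0 \<le> Ck"
    and hk: "\<And>w. v \<noteq> w \<Longrightarrow> \<bar>k v w\<bar> \<le> Ck * Efac \<rho> v w / (norm (v - w) * (1 + norm v + norm w) powr (1 - \<gamma>))"
  shows "(\<integral>\<^sup>+w. ennreal (\<bar>k v w\<bar> * exp (- \<alpha> * (norm w)\<^sup>2)) \<partial>lborel)
     \<le> ennreal (Ck * exp (- \<alpha> * (norm v)\<^sup>2)) * (\<integral>\<^sup>+t. ennreal (Phi d t) \<partial>lborel) ^ 3"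
proof -
  have "(\<integral>\<^sup>+w. ennreal (\<bar>k v w\<bar> * exp (- \<alpha> * (norm w)\<^sup>2)) \<partial>lborel)
     \<le> (\<integral>\<^sup>+w. ennreal (Ck * exp (- \<alpha> * (norm v)\<^sup>2)) * ennreal (exp (- d * (norm (v - w))\<^sup>2) * norm (v - w) powr (-1)) \<partial>lborel)"
    using AE_lborel_singleton[of v]
  proof (intro nn_integral_mono_AE, eventually_elim)
    case (elim w)
    then have vw: "v \<noteq> w" by simp
    show ?case using k_est[where k=k and v=v and w=w, OF vw a r ar bd g C hk[OF vw]] C
      by (subst ennreal_mult[symmetric]) (auto intro: ennreal_leI)
  qed
  also have "\<dots> = ennreal (Ck * exp (- \<alpha> * (norm v)\<^sup>2)) * (\<integral>\<^sup>+w. ennreal (exp (- d * (norm (v - w))\<^sup>2) * norm (v - w) powr (-1)) \<partial>lborel)"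
    by (rule nn_integral_cmult) measurable
  also have "\<dots> \<le> ennreal (Ck * exp (- \<alpha> * (norm v)\<^sup>2)) * (\<integral>\<^sup>+t. ennreal (Phi d t) \<partial>lborel) ^ 3"
    using G_q[of 1 d v] d0 by (intro mult_left_mono) auto
  finally show ?thesis .
qed

lemma KE2:
  fixes v :: vec3
  assumes a: "0 \<le> \<alpha>" and r: "\<rho> < 1" and ar: "\<alpha> < (1 - \<rho>) / 2"
    and bd: "\<beta> = (1 - \<rho>) / 4" "d = \<beta> - \<alpha>\<^sup>2 / (4 * \<beta>)" and d0: "0 \<le> d"
    and g: "\<gamma> \<le> 1" and C: "0 \<le> Ck"
    and hk: "\<And>w. v \<noteq> w \<Longrightarrow> \<bar>k v w\<bar> \<le> Ck * Efac \<rho> v w / (norm (v - w) * (1 + norm v + norm w) powr (1 - \<gamma>))"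
  shows "(\<integral>\<^sup>+w. ennreal (\<bar>k v w\<bar> * (exp (- \<alpha> * (norm w)\<^sup>2) * norm w powr (-1))) \<partial>lborel)
     \<le> ennreal (Ck * exp (- \<alpha> * (norm v)\<^sup>2)) * (3 * (\<integral>\<^sup>+t. ennreal (Phi d t) \<partial>lborel) ^ 3)"
proof -
  let ?c = "Ck * exp (- \<alpha> * (norm v)\<^sup>2)"
  have c0: "0 \<le> ?c" using C by simp
  have addeq: "(\<integral>\<^sup>+w. ennreal (exp (- d * (norm (v - w))\<^sup>2) * norm (v - w) powr (-2))
            + ennreal (exp (- d * (norm (v - w))\<^sup>2) * norm w powr (-2)) \<partial>lborel) = 
         (\<integral>\<^sup>+w. ennreal (exp (- d * (norm (v - w))\<^sup>2) * norm (v - w) powr (-2)) \<partial>lborel)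
            + (\<integral>\<^sup>+w. ennreal (exp (- d * (norm (v - w))\<^sup>2) * norm w powr (-2)) \<partial>lborel)"
    by (rule nn_integral_add) measurable
  have "(\<integral>\<^sup>+w. ennreal (\<bar>k v w\<bar> * (exp (- \<alpha> * (norm w)\<^sup>2) * norm w powr (-1))) \<partial>lborel)
     \<le> (\<integral>\<^sup>+w. ennreal ?c * (ennreal (exp (- d * (norm (v - w))\<^sup>2) * norm (v - w) powr (-2))
            + ennreal (exp (- d * (norm (v - w))\<^sup>2) * norm w powr (-2))) \<partial>lborel)"
    using AE_lborel_singleton[of v]
  proof (intro nn_integral_mono_AE, eventually_elim)
    case (elim w)
    then have vw: "v \<noteq> w" by simp
    define A where "A = norm (v - w) powr (-1)"
    define B where "B = norm w powr (-1)"
    define X where "X = exp (- d * (norm (v - w))\<^sup>2)"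
    have A0: "0 \<le> A" "0 \<le> B" "0 \<le> X" by (auto simp: A_def B_def X_def)
    have A2: "norm (v - w) powr (-2) = A * A" "norm w powr (-2) = B * B"
      unfolding A_def B_def powr_add[symmetric] by simp_all
    have "\<bar>k v w\<bar> * (exp (- \<alpha> * (norm w)\<^sup>2) * norm w powr (-1)) = (\<bar>k v w\<bar> * exp (- \<alpha> * (norm w)\<^sup>2)) * B"
      by (simp add: B_def)
    also have "\<dots> \<le> (?c * (X * A)) * B"
      using k_est[where k=k and v=v and w=w, OF vw a r ar bd g C hk[OF vw]] A0 by (intro mult_right_mono) (auto simp: X_def A_def)
    also have "\<dots> \<le> ?c * (X * (A * A) + X * (B * B))"
    proof -
      have e: "(A - B)\<^sup>2 = A * A + B * B - 2 * (A * B)" by (simp add: power2_eq_square algebra_simps)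
      have "0 \<le> (A - B)\<^sup>2" by simp
      then have "A * B \<le> A * A + B * B" using e mult_nonneg_nonneg[OF A0(1) A0(2)] by linarith
      then have "X * (A * B) \<le> X * (A * A + B * B)" using A0 by (intro mult_left_mono) auto
      then have "?c * (X * (A * B)) \<le> ?c * (X * (A * A + B * B))" by (rule mult_left_mono[OF _ c0])
      moreover have "(?c * (X * A)) * B = ?c * (X * (A * B))" by (simp only: mult.assoc)
      moreover have "?c * (X * (A * A + B * B)) = ?c * (X * (A * A) + X * (B * B))" by (simp only: distrib_left)
      ultimately show ?thesis by (simp only:)
    qed
    finally have le: "\<bar>k v w\<bar> * (exp (- \<alpha> * (norm w)\<^sup>2) * norm w powr (-1)) \<le> ?c * (X * (A * A) + X * (B * B))" .
    show ?case unfolding A2 X_def[symmetric]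
      using le A0 c0 by (simp add: ennreal_mult[symmetric] ennreal_plus[symmetric] del: ennreal_plus)
  qed
  also have "\<dots> = ennreal ?c * (\<integral>\<^sup>+w. ennreal (exp (- d * (norm (v - w))\<^sup>2) * norm (v - w) powr (-2))
            + ennreal (exp (- d * (norm (v - w))\<^sup>2) * norm w powr (-2)) \<partial>lborel)"
    by (rule nn_integral_cmult) measurable
  also have "\<dots> = ennreal ?c * ((\<integral>\<^sup>+w. ennreal (exp (- d * (norm (v - w))\<^sup>2) * norm (v - w) powr (-2)) \<partial>lborel)
            + (\<integral>\<^sup>+w. ennreal (exp (- d * (norm (v - w))\<^sup>2) * norm w powr (-2)) \<partial>lborel))"
    by (simp only: addeq)
  also have "\<dots> \<le> ennreal ?c * ((\<integral>\<^sup>+t. ennreal (Phi d t) \<partial>lborel) ^ 3 + 2 * (\<integral>\<^sup>+t. ennreal (Phi d t) \<partial>lborel) ^ 3)"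
    using G_q[of 2 d v] G3[of d v] d0 by (intro mult_left_mono add_mono) auto
  also have "\<dots> = ennreal ?c * (3 * (\<integral>\<^sup>+t. ennreal (Phi d t) \<partial>lborel) ^ 3)"
  proof -
    have e3: "P + 2 * P = 3 * (P::ennreal)" for P
    proof -
      have "(1 + 2) * P = 1 * P + 2 * P" by (rule distrib_right)
      then show ?thesis by simp
    qed
    show ?thesis by (simp only: e3)
  qed
  finally show ?thesis .
qed



lemma tau_inside:
  assumes "0 \<le> s" "s < tau \<Omega> x v"
  shows "x - s *\<^sub>R v \<in> \<Omega>"
proof (rule ccontr)
  assume "x - s *\<^sub>R v \<notin> \<Omega>"
  then have "tau \<Omega> x v \<le> s" unfolding tau_def using assms(1)
    by (intro cInf_lower) (auto intro: bdd_belowI[of _ 0])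
  then show False using assms by simp
qed

lemma tau_set_ne:
  fixes x v :: vec3
  assumes "bounded \<Omega>" "\<not> (x \<in> \<Omega> \<and> v = 0)"
  shows "{s. 0 \<le> s \<and> x - s *\<^sub>R v \<notin> \<Omega>} \<noteq> {}"
proof (cases "x \<in> \<Omega>")
  case False then show ?thesis by (auto intro!: exI[of _ 0])
next
  case True
  then have v: "v \<noteq> 0" using assms by auto
  obtain B where B: "\<forall>y\<in>\<Omega>. norm y \<le> B" using assms(1) by (auto simp: bounded_iff)
  define s where "s = (\<bar>B\<bar> + norm x + 1) / norm v"
  have s0: "0 \<le> s" using v by (simp add: s_def)
  have "s * norm v = \<bar>B\<bar> + norm x + 1" using v by (simp add: s_def)
  moreover have "norm (s *\<^sub>R v) \<le> norm (x - s *\<^sub>R v) + norm x" using norm_triangle_sub[of "s *\<^sub>R v" x]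
    by (simp add: norm_minus_commute)
  ultimately have "norm (x - s *\<^sub>R v) > B" using s0 by simp
  then have "x - s *\<^sub>R v \<notin> \<Omega>" using B by force
  then show ?thesis using s0 by auto
qed

lemma tau_closed:
  fixes x v :: vec3
  assumes "open \<Omega>"
  shows "closed {s. 0 \<le> s \<and> x - s *\<^sub>R v \<notin> \<Omega>}"
proof -
  have "{s. 0 \<le> s \<and> x - s *\<^sub>R v \<notin> \<Omega>} = {0..} \<inter> (\<lambda>s. x - s *\<^sub>R v) -` (- \<Omega>)" by auto
  moreover have "closed ((\<lambda>s::real. x - s *\<^sub>R v) -` (- \<Omega>))"
    using assms by (intro continuous_closed_vimage) (auto intro!: continuous_intros)
  ultimately show ?thesis by (auto intro: closed_Int)
qed

lemma tau_mem:
  fixes x v :: vec3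
  assumes "open \<Omega>" "bounded \<Omega>" "\<not> (x \<in> \<Omega> \<and> v = 0)"
  shows "tau \<Omega> x v \<in> {s. 0 \<le> s \<and> x - s *\<^sub>R v \<notin> \<Omega>}"
  unfolding tau_def
  by (rule closed_contains_Inf[OF tau_set_ne[OF assms(2,3)]]) (auto intro: bdd_belowI[of _ 0] tau_closed[OF assms(1)])

lemma tau_nonneg:
  fixes x v :: vec3
  assumes "open \<Omega>" "bounded \<Omega>" "v \<noteq> 0"
  shows "0 \<le> tau \<Omega> x v"
  using tau_mem[OF assms(1,2)] assms(3) by auto

lemma tau_bound:
  fixes x v :: vec3
  assumes "open \<Omega>" "bounded \<Omega>" "v \<noteq> 0" "x \<in> \<Omega>"
  shows "tau \<Omega> x v * norm v \<le> diameter \<Omega>"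
proof (rule ccontr)
  assume "\<not> ?thesis"
  then have lt: "diameter \<Omega> / norm v < tau \<Omega> x v" using assms(3) by (simp add: divide_less_eq)
  define q0 where "q0 = diameter \<Omega> / norm v"
  define s where "s = (q0 + tau \<Omega> x v) / 2"
  have d0: "0 \<le> diameter \<Omega>" by (simp add: diameter_ge_0 assms(2))
  have q: "0 \<le> q0" using d0 by (simp add: q0_def)
  have lt: "q0 < tau \<Omega> x v" using lt by (simp add: q0_def)
  have s1: "0 \<le> s" using lt q unfolding s_def by (simp add: field_simps)
  have s2: "s < tau \<Omega> x v" using lt q unfolding s_def by (simp add: field_simps)
  have s3: "q0 < s" using lt q unfolding s_def by (simp add: field_simps)
  note s = s1 s2 s3
  have "x - s *\<^sub>R v \<in> \<Omega>" by (rule tau_inside) (use s in auto)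
  then have "dist x (x - s *\<^sub>R v) \<le> diameter \<Omega>" using assms by (intro diameter_bounded_bound) auto
  then have "s * norm v \<le> diameter \<Omega>" using s by (simp add: dist_norm)
  then show False using s(3) assms(3) by (simp add: divide_less_eq q0_def)
qed

lemma tau_meas:
  assumes "open \<Omega>" "bounded \<Omega>"
  shows "(\<lambda>z::vec3\<times>vec3. tau \<Omega> (fst z) (snd z)) \<in> borel_measurable borel"
proof (rule borel_measurable_iff_le[THEN iffD2], intro allI)
  fix a :: real
  define c0 where "c0 = Inf ({}::real set)"
  define T where "T = (\<lambda>p::real \<times> (vec3 \<times> vec3). fst (snd p) - fst p *\<^sub>R snd (snd p)) -` (- \<Omega>)"
  define P where "P = {z. \<exists>s. s \<in> {0..a} \<and> (s, z) \<in> T}"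
  define Z where "Z = {z::vec3\<times>vec3. snd z = 0 \<and> fst z \<in> \<Omega> \<and> c0 \<le> a}"
  have Tc: "closed T" unfolding T_def
    using assms(1) by (intro continuous_closed_vimage) (auto intro!: continuous_intros)
  have Pc: "closed P" unfolding P_def by (rule closed_compact_projection[OF compact_Icc Tc])
  have Zb: "Z \<in> sets borel"
  proof -
    have "Z = (if c0 \<le> a then \<Omega> \<times> {0} else {})" by (auto simp: Z_def)
    moreover have "\<Omega> \<times> {0} = (\<Omega> \<times> UNIV) \<inter> (UNIV \<times> {0::vec3})" by auto
    moreover have "\<Omega> \<times> UNIV \<in> sets borel" using assms(1) by (intro borel_open open_Times) auto
    moreover have "UNIV \<times> {0::vec3} \<in> sets borel" by (intro borel_closed closed_Times) auto
    ultimately show ?thesis by (metis sets.Int sets.empty_sets)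
  qed
  have eq: "{z \<in> space borel. tau \<Omega> (fst z) (snd z) \<le> a} = P \<union> Z"
  proof (intro set_eqI iffI)
    fix z :: "vec3 \<times> vec3"
    obtain x v where z: "z = (x, v)" by fastforce
    show "z \<in> P \<union> Z" if "z \<in> {z \<in> space borel. tau \<Omega> (fst z) (snd z) \<le> a}"
    proof (cases "x \<in> \<Omega> \<and> v = 0")
      case True
      then have e: "{s. 0 \<le> s \<and> x - s *\<^sub>R v \<notin> \<Omega>} = {}" by auto
      have "tau \<Omega> x v = c0" unfolding tau_def c0_def e ..
      then show ?thesis using that True z by (auto simp: Z_def)
    next
      case False
      from tau_mem[OF assms False] that z show ?thesis by (auto simp: P_def T_def)
    qed
    show "z \<in> {z \<in> space borel. tau \<Omega> (fst z) (snd z) \<le> a}" if "z \<in> P \<union> Z"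
    proof (cases "x \<in> \<Omega> \<and> v = 0")
      case True
      then have e: "{s. 0 \<le> s \<and> x - s *\<^sub>R v \<notin> \<Omega>} = {}" by auto
      have "tau \<Omega> x v = c0" unfolding tau_def c0_def e ..
      moreover have "z \<notin> P" using True z by (auto simp: P_def T_def)
      ultimately show ?thesis using that True z by (auto simp: Z_def)
    next
      case False
      then have "z \<notin> Z" using z by (auto simp: Z_def)
      with that obtain s where s: "s \<in> {0..a}" "x - s *\<^sub>R v \<notin> \<Omega>" using z by (auto simp: P_def T_def)
      then have "tau \<Omega> x v \<le> s" unfolding tau_def
        by (intro cInf_lower) (auto intro: bdd_belowI[of _ 0])
      then show ?thesis using s z by auto
    qed
  qed
  show "{z \<in> space borel. tau \<Omega> (fst z) (snd z) \<le> a} \<in> sets borel"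
    unfolding eq using Pc Zb by auto
qed



lemma point_change_meas:
  fixes f g :: "real \<Rightarrow> real"
  assumes "\<And>s. s \<noteq> s0 \<Longrightarrow> f s = g s" and "f \<in> borel_measurable lborel"
  shows "g \<in> borel_measurable lborel"
proof -
  have "g = (\<lambda>s. if s = s0 then g s0 else f s)" using assms(1) by (auto simp: fun_eq_iff)
  also have "\<dots> \<in> borel_measurable lborel" using assms(2) by measurable
  finally show ?thesis .
qed

lemma integral_point_change:
  fixes f g :: "real \<Rightarrow> real"
  assumes fg: "\<And>s. s \<noteq> s0 \<Longrightarrow> f s = g s"
  shows "integral\<^sup>L lborel f = integral\<^sup>L lborel g"
proof (cases "f \<in> borel_measurable lborel")
  case True
  then have "g \<in> borel_measurable lborel" using point_change_meas[of s0 f g] fg by blast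
  then show ?thesis using True AE_lborel_singleton[of s0] fg
    by (intro integral_cong_AE) (auto elim: eventually_mono)
next
  case False
  have gf: "\<And>s. s \<noteq> s0 \<Longrightarrow> g s = f s" using fg by metis
  then have "g \<notin> borel_measurable lborel" using point_change_meas[of s0 g f] False by blast
  then have "\<not> integrable lborel g" "\<not> integrable lborel f" using False borel_measurable_integrable by blast+
  then show ?thesis by (simp add: not_integrable_integral_eq)
qed

lemma mt: "(\<lambda>(z::vec3\<times>vec3, s::real). fst z - s *\<^sub>R snd z) \<in> borel_measurable ((borel \<Otimes>\<^sub>M borel) \<Otimes>\<^sub>M lborel)"
  by measurable


lemma S_restrict:
  "S_op \<Omega> \<nu> g x v = S_op \<Omega> \<nu> (\<lambda>y w. indicator \<Omega> y * g y w) x v"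
  unfolding S_op_def set_lebesgue_integral_def
proof (rule integral_point_change[of "tau \<Omega> x v"])
  fix s assume s: "s \<noteq> tau \<Omega> x v"
  show "indicator {0..tau \<Omega> x v} s *\<^sub>R (exp (- \<nu> v * s) * g (x - s *\<^sub>R v) v) =
        indicator {0..tau \<Omega> x v} s *\<^sub>R (exp (- \<nu> v * s) * (indicator \<Omega> (x - s *\<^sub>R v) * g (x - s *\<^sub>R v) v))"
  proof (cases "s \<in> {0..tau \<Omega> x v}")
    case True
    then have "x - s *\<^sub>R v \<in> \<Omega>" using s by (intro tau_inside) auto
    then show ?thesis by simp
  qed simp
qed

lemma S_meas:
  assumes om: "open \<Omega>" "bounded \<Omega>" and nu[measurable]: "\<nu> \<in> borel_measurable borel"
    and g: "(\<lambda>z. g (fst z) (snd z)) \<in> borel_measurable (borel \<Otimes>\<^sub>M borel)"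
  shows "(\<lambda>z. S_op \<Omega> \<nu> g (fst z) (snd z)) \<in> borel_measurable (borel \<Otimes>\<^sub>M borel)"
proof -
  have tm[measurable]: "(\<lambda>z. tau \<Omega> (fst z) (snd z)) \<in> borel_measurable (borel \<Otimes>\<^sub>M borel)"
    using tau_meas[OF om] by (simp add: borel_prod)
  have gm[measurable]: "(\<lambda>p. g (fst (fst p) - snd p *\<^sub>R snd (fst p)) (snd (fst p))) \<in> borel_measurable ((borel \<Otimes>\<^sub>M borel) \<Otimes>\<^sub>M lborel)"
  proof -
    have "(\<lambda>p::(vec3\<times>vec3)\<times>real. (fst (fst p) - snd p *\<^sub>R snd (fst p), snd (fst p))) \<in> measurable ((borel \<Otimes>\<^sub>M borel) \<Otimes>\<^sub>M lborel) (borel \<Otimes>\<^sub>M borel)"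
      by measurable
    from measurable_compose[OF this g] show ?thesis by simp
  qed
  show ?thesis
    unfolding S_op_def set_lebesgue_integral_def
  proof (rule lborel.borel_measurable_lebesgue_integral)
    have ind[measurable]: "(\<lambda>p::(vec3\<times>vec3)\<times>real. indicator {0..tau \<Omega> (fst (fst p)) (snd (fst p))} (snd p) :: real) \<in> borel_measurable ((borel \<Otimes>\<^sub>M borel) \<Otimes>\<^sub>M lborel)"
      unfolding indicator_def atLeastAtMost_iff mem_Collect_eq by measurable
    show "(\<lambda>(z, s). indicator {0..tau \<Omega> (fst z) (snd z)} s *\<^sub>R (exp (- \<nu> (snd z) * s) * g (fst z - s *\<^sub>R snd z) (snd z)))
      \<in> borel_measurable ((borel \<Otimes>\<^sub>M borel) \<Otimes>\<^sub>M lborel)"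
      unfolding split_beta' by measurable
  qed
qed

lemma Kop_meas:
  assumes k[measurable]: "(\<lambda>z. k (fst z) (snd z)) \<in> borel_measurable (borel \<Otimes>\<^sub>M borel)"
    and f: "(\<lambda>z. f (fst z) (snd z)) \<in> borel_measurable (borel \<Otimes>\<^sub>M borel)"
  shows "(\<lambda>z. Kop k f (fst z) (snd z)) \<in> borel_measurable (borel \<Otimes>\<^sub>M borel)"
proof -
  have fm[measurable]: "(\<lambda>p::(vec3\<times>vec3)\<times>vec3. f (fst (fst p)) (snd p)) \<in> borel_measurable ((borel \<Otimes>\<^sub>M borel) \<Otimes>\<^sub>M lborel)"
  proof -
    have "(\<lambda>p::(vec3\<times>vec3)\<times>vec3. (fst (fst p), snd p)) \<in> measurable ((borel \<Otimes>\<^sub>M borel) \<Otimes>\<^sub>M lborel) (borel \<Otimes>\<^sub>M borel)"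
      by measurable
    from measurable_compose[OF this f] show ?thesis by simp
  qed
  have km[measurable]: "(\<lambda>p::(vec3\<times>vec3)\<times>vec3. k (snd (fst p)) (snd p)) \<in> borel_measurable ((borel \<Otimes>\<^sub>M borel) \<Otimes>\<^sub>M lborel)"
  proof -
    have "(\<lambda>p::(vec3\<times>vec3)\<times>vec3. (snd (fst p), snd p)) \<in> measurable ((borel \<Otimes>\<^sub>M borel) \<Otimes>\<^sub>M lborel) (borel \<Otimes>\<^sub>M borel)"
      by measurable
    from measurable_compose[OF this k] show ?thesis by simp
  qed
  show ?thesis
    unfolding Kop_def
    by (rule lborel.borel_measurable_lebesgue_integral[where f="\<lambda>z w. k (snd z) w * f (fst z) w", simplified]) measurable
qed



lemma psf: "pair_sigma_finite (lborel :: ('a::euclidean_space) measure) (lborel :: ('b::euclidean_space) measure)"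
  by (intro pair_sigma_finite.intro lborel.sigma_finite_measure_axioms)

lemma null_translate:
  fixes N :: "vec3 set" and c :: vec3
  assumes N: "N \<in> null_sets lborel"
  shows "emeasure lborel {x. x + c \<in> N} = 0"
proof -
  have Ns: "N \<in> sets borel" using N by (auto simp: null_sets_def)
  have "emeasure lborel N = emeasure (distr lborel borel ((+) c)) N" by (simp add: lborel_distr_plus)
  also have "\<dots> = emeasure lborel ((+) c -` N \<inter> space lborel)"
    using Ns by (intro emeasure_distr) auto
  finally have "emeasure lborel ((+) c -` N) = 0" using null_setsD1[OF N] by simp
  moreover have "(+) c -` N = {x. x + c \<in> N}" by (auto simp: add.commute)
  ultimately show ?thesis by simp
qed

lemma line_AE:
  fixes N :: "vec3 set"
  assumes N: "N \<in> null_sets lborel"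
  shows "AE z in (lborel :: (vec3 \<times> vec3) measure). AE s in lborel. fst z - s *\<^sub>R snd z \<notin> N"
proof -
  have Ns[measurable]: "N \<in> sets borel" using N by (auto simp: null_sets_def)
  define B where "B = {p :: (vec3 \<times> vec3) \<times> real. fst (fst p) - snd p *\<^sub>R snd (fst p) \<in> N}"
  have Bs: "B \<in> sets ((lborel :: (vec3 \<times> vec3) measure) \<Otimes>\<^sub>M (lborel :: real measure))"
  proof -
    have "B = (\<lambda>p :: (vec3 \<times> vec3) \<times> real. fst (fst p) - snd p *\<^sub>R snd (fst p)) -` N \<inter> space ((lborel :: (vec3 \<times> vec3) measure) \<Otimes>\<^sub>M (lborel :: real measure))"
      by (auto simp: B_def space_pair_measure)
    also have "\<dots> \<in> sets ((lborel :: (vec3 \<times> vec3) measure) \<Otimes>\<^sub>M (lborel :: real measure))"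
      by (rule measurable_sets[OF _ Ns]) (simp add: lborel_prod[symmetric])
    finally show ?thesis .
  qed
  have inner: "emeasure (lborel :: (vec3 \<times> vec3) measure) ((\<lambda>z. (z, s)) -` B) = 0" for s :: real
  proof -
    have Bs': "(\<lambda>z. (z, s)) -` B \<in> sets ((lborel :: vec3 measure) \<Otimes>\<^sub>M (lborel :: vec3 measure))"
    proof -
      have "(\<lambda>z. (z, s)) -` B = (\<lambda>z::vec3\<times>vec3. fst z - s *\<^sub>R snd z) -` N \<inter> space ((lborel :: vec3 measure) \<Otimes>\<^sub>M (lborel :: vec3 measure))"
        by (auto simp: B_def space_pair_measure)
      also have "\<dots> \<in> sets ((lborel :: vec3 measure) \<Otimes>\<^sub>M (lborel :: vec3 measure))"
        by (rule measurable_sets[OF _ Ns]) measurable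
      finally show ?thesis .
    qed
    have "emeasure (lborel :: (vec3 \<times> vec3) measure) ((\<lambda>z. (z, s)) -` B)
        = emeasure ((lborel :: vec3 measure) \<Otimes>\<^sub>M (lborel :: vec3 measure)) ((\<lambda>z. (z, s)) -` B)"
      by (simp add: lborel_prod)
    also have "\<dots> = (\<integral>\<^sup>+v. emeasure lborel ((\<lambda>x. (x, v)) -` ((\<lambda>z. (z, s)) -` B)) \<partial>lborel)"
      by (rule pair_sigma_finite.emeasure_pair_measure_alt2[OF psf Bs'])
    also have "\<dots> = (\<integral>\<^sup>+v. 0 \<partial>(lborel :: vec3 measure))"
    proof (intro nn_integral_cong)
      fix v :: vec3
      have "(\<lambda>x. (x, v)) -` ((\<lambda>z. (z, s)) -` B) = {x. x + (- (s *\<^sub>R v)) \<in> N}" by (auto simp: B_def)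
      then show "emeasure lborel ((\<lambda>x. (x, v)) -` ((\<lambda>z. (z, s)) -` B)) = 0"
        using null_translate[OF N, of "- (s *\<^sub>R v)"] by simp
    qed
    finally show ?thesis by simp
  qed
  have "emeasure ((lborel :: (vec3 \<times> vec3) measure) \<Otimes>\<^sub>M (lborel :: real measure)) B
      = (\<integral>\<^sup>+s. emeasure lborel ((\<lambda>z. (z, s)) -` B) \<partial>lborel)"
    by (rule pair_sigma_finite.emeasure_pair_measure_alt2[OF psf Bs])
  also have "\<dots> = 0" using inner by simp
  finally have "B \<in> null_sets ((lborel :: (vec3 \<times> vec3) measure) \<Otimes>\<^sub>M (lborel :: real measure))"
    using Bs by auto
  then have "AE p in (lborel :: (vec3 \<times> vec3) measure) \<Otimes>\<^sub>M (lborel :: real measure). p \<notin> B"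
    by (rule AE_not_in)
  then have "AE z in (lborel :: (vec3 \<times> vec3) measure). AE s in lborel. (z, s) \<notin> B"
    by (rule pair_sigma_finite.AE_pair[OF psf])
  then show ?thesis by (simp add: B_def)
qed



lemma K_step:
  fixes F \<omega> :: "vec3 \<Rightarrow> real"
  assumes AF: "AE w in lborel. \<bar>F w\<bar> \<le> B * \<omega> w" and B: "0 \<le> B"
    and om: "\<And>w. 0 \<le> \<omega> w"
    and meas: "(\<lambda>w. ennreal (\<bar>k v w\<bar> * \<omega> w)) \<in> borel_measurable lborel"
    and KB: "(\<integral>\<^sup>+w. ennreal (\<bar>k v w\<bar> * \<omega> w) \<partial>lborel) \<le> ennreal Kc" and Kc: "0 \<le> Kc"
  shows "\<bar>\<integral>w. k v w * F w \<partial>lborel\<bar> \<le> B * Kc"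
proof (rule abs_integral_le_nn)
  show "AE w in lborel. \<bar>k v w * F w\<bar> \<le> B * (\<bar>k v w\<bar> * \<omega> w)"
    using AF
  proof (rule eventually_mono)
    fix w assume "\<bar>F w\<bar> \<le> B * \<omega> w"
    then have "\<bar>k v w\<bar> * \<bar>F w\<bar> \<le> \<bar>k v w\<bar> * (B * \<omega> w)" by (intro mult_left_mono) auto
    then show "\<bar>k v w * F w\<bar> \<le> B * (\<bar>k v w\<bar> * \<omega> w)" by (simp add: abs_mult algebra_simps)
  qed
  have "(\<integral>\<^sup>+w. ennreal (B * (\<bar>k v w\<bar> * \<omega> w)) \<partial>lborel) = (\<integral>\<^sup>+w. ennreal B * ennreal (\<bar>k v w\<bar> * \<omega> w) \<partial>lborel)"
    using B om by (intro nn_integral_cong) (simp add: ennreal_mult)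
  also have "\<dots> = ennreal B * (\<integral>\<^sup>+w. ennreal (\<bar>k v w\<bar> * \<omega> w) \<partial>lborel)"
    using meas by (rule nn_integral_cmult)
  also have "\<dots> \<le> ennreal B * ennreal Kc" using KB by (intro mult_left_mono) auto
  also have "\<dots> = ennreal (B * Kc)" using B Kc by (simp add: ennreal_mult)
  finally show "(\<integral>\<^sup>+w. ennreal (B * (\<bar>k v w\<bar> * \<omega> w)) \<partial>lborel) \<le> ennreal (B * Kc)" .
  show "0 \<le> B * Kc" using B Kc by simp
qed

lemma AE_snd_nz: "AE z in (lborel :: (vec3 \<times> vec3) measure). snd z \<noteq> 0"
proof -
  have "UNIV \<times> {0::vec3} \<in> null_sets ((lborel :: vec3 measure) \<Otimes>\<^sub>M (lborel :: vec3 measure))"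
    by (intro lborel.times_in_null_sets2) auto
  then have "UNIV \<times> {0::vec3} \<in> null_sets (lborel :: (vec3 \<times> vec3) measure)"
    by (simp add: lborel_prod)
  then show ?thesis by (rule AE_I'[THEN eventually_mono]) auto
qed

definition restr :: "vec3 set \<Rightarrow> (vec3 \<Rightarrow> vec3 \<Rightarrow> real) \<Rightarrow> vec3 \<Rightarrow> vec3 \<Rightarrow> real" where
  "restr \<Omega> f = (\<lambda>y w. indicator \<Omega> y * f y w)"

lemma restr_meas:
  assumes "open \<Omega>" "(\<lambda>z. f (fst z) (snd z)) \<in> borel_measurable (borel \<Otimes>\<^sub>M borel)"
  shows "(\<lambda>z. restr \<Omega> f (fst z) (snd z)) \<in> borel_measurable (borel \<Otimes>\<^sub>M borel)"
proof -
  have [measurable]: "\<Omega> \<in> sets borel" using assms(1) by auto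
  show ?thesis unfolding restr_def using assms(2) by measurable
qed

lemma SK_meas:
  assumes om: "open \<Omega>" "bounded \<Omega>" and nu: "\<nu> \<in> borel_measurable borel"
    and k: "(\<lambda>z. k (fst z) (snd z)) \<in> borel_measurable (borel \<Otimes>\<^sub>M borel)"
    and f: "(\<lambda>z. restr \<Omega> f (fst z) (snd z)) \<in> borel_measurable (borel \<Otimes>\<^sub>M borel)"
  shows "(\<lambda>z. S_op \<Omega> \<nu> (Kop k f) (fst z) (snd z)) \<in> borel_measurable (borel \<Otimes>\<^sub>M borel)"
proof -
  have eq: "S_op \<Omega> \<nu> (Kop k f) x v = S_op \<Omega> \<nu> (restr \<Omega> (Kop k (restr \<Omega> f))) x v" for x v
  proof -
    have "restr \<Omega> (Kop k f) = restr \<Omega> (Kop k (restr \<Omega> f))"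
      by (auto simp: restr_def Kop_def fun_eq_iff indicator_def)
    then show ?thesis using S_restrict[of \<Omega> \<nu> "Kop k f" x v] S_restrict[of \<Omega> \<nu> "Kop k (restr \<Omega> f)" x v]
      by (simp add: restr_def)
  qed
  show ?thesis unfolding eq
    by (intro S_meas om nu restr_meas Kop_meas k f)
qed



lemma e1: "exp (- a) * exp (a::real) = 1"
  using exp_minus_inverse[of a] by (simp add: mult.commute)
lemma e2: "y = exp (- a) * (exp (a::real) * y)"
proof -
  have "exp (- a) * (exp a * y) = (exp (- a) * exp a) * y" by (rule mult.assoc[symmetric])
  then show ?thesis by (simp only: e1 mult_1_left)
qed
lemma e3: "exp (a::real) * (B * exp (- a)) = B"
proof -
  have "exp a * (B * exp (- a)) = B * (exp (- a) * exp a)" by (simp only: mult_ac)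
  then show ?thesis by (simp only: e1 mult_1_right)
qed

lemma exp_div_bound: "exp a * y \<le> M \<Longrightarrow> y \<le> M * exp (- (a::real))"
proof -
  assume h: "exp a * y \<le> M"
  have "exp (- a) * (exp a * y) \<le> exp (- a) * M" using h by (intro mult_left_mono) auto
  then have "y \<le> exp (- a) * M" by (simp only: e2[symmetric])
  then show ?thesis by (simp only: mult.commute)
qed

lemma exp_mul_bound: "y \<le> B * exp (- a) \<Longrightarrow> exp a * y \<le> (B::real)"
proof -
  assume h: "y \<le> B * exp (- a)"
  have "exp a * y \<le> exp a * (B * exp (- a))" using h by (intro mult_left_mono) auto
  then show ?thesis by (simp only: e3)
qed

theorem corollary3p2:
  fixes \<nu> :: "vec3 \<Rightarrow> real" and k :: "vec3 \<Rightarrow> vec3 \<Rightarrow> real" and \<gamma> \<rho> \<alpha> :: real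
  assumes "propertyA \<nu> k \<gamma> \<rho>"
    and "0 \<le> \<alpha>" and "\<alpha> < (1 - \<rho>) / 2"
  shows "\<exists>C\<ge>0. \<forall>(\<Omega>::vec3 set) h.
           open \<Omega> \<and> connected \<Omega> \<and> \<Omega> \<noteq> {} \<and> bounded \<Omega> \<and>
           set_borel_measurable lborel (\<Omega> \<times> UNIV) (\<lambda>(x, v). h x v) \<and>
           wnorm \<Omega> \<alpha> h < \<infinity> \<longrightarrow>
           wnorm \<Omega> \<alpha> (S_op \<Omega> \<nu> (Kop k (S_op \<Omega> \<nu> (Kop k h))))
             \<le> ereal C * ereal (diameter \<Omega>) * wnorm \<Omega> \<alpha> h"
proof -
  note pA = assms(1)[unfolded propertyA_def]
  have g1: "\<gamma> \<le> 1" and r0: "0 \<le> \<rho>" and r1: "\<rho> < 1" using pA by auto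
  have a0: "0 \<le> \<alpha>" and ar: "\<alpha> < (1 - \<rho>) / 2" using assms by auto
  have kmeas: "(\<lambda>(v, w). k v w) \<in> borel_measurable lborel" using pA by auto
  obtain c where c: "0 < c" and cnu: "\<And>v. c * (1 + norm v) powr \<gamma> \<le> \<nu> v"
    using pA by blast
  obtain Cd where nuD: "\<And>v. \<exists>D. (\<nu> has_derivative D) (at v) \<and> onorm D \<le> Cd * (1 + norm v) powr (\<gamma> - 1)"
    using pA by blast
  obtain Ck0 where hk0: "\<And>v w. v \<noteq> w \<Longrightarrow> \<bar>k v w\<bar> \<le> Ck0 * Efac \<rho> v w / (norm (v - w) * (1 + norm v + norm w) powr (1 - \<gamma>))"
    using pA by blast
  define Ck where "Ck = max Ck0 0"
  have Ck: "0 \<le> Ck" by (simp add: Ck_def)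
  have hk: "\<bar>k v w\<bar> \<le> Ck * Efac \<rho> v w / (norm (v - w) * (1 + norm v + norm w) powr (1 - \<gamma>))"
    if vw: "v \<noteq> w" for v w
  proof -
    have "0 \<le> Efac \<rho> v w / (norm (v - w) * (1 + norm v + norm w) powr (1 - \<gamma>))"
      by (simp add: Efac_def)
    then have "Ck0 * (Efac \<rho> v w / (norm (v - w) * (1 + norm v + norm w) powr (1 - \<gamma>)))
        \<le> Ck * (Efac \<rho> v w / (norm (v - w) * (1 + norm v + norm w) powr (1 - \<gamma>)))"
      by (intro mult_right_mono) (auto simp: Ck_def)
    then show ?thesis using hk0[OF vw] by simp
  qed
  have nu_ge: "c \<le> \<nu> v" for v
  proof -
    have "1 \<le> (1 + norm v) powr \<gamma>" using pA by (intro ge_one_powr_ge_zero) auto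
    then have "c * 1 \<le> c * (1 + norm v) powr \<gamma>" using c by (intro mult_left_mono) auto
    then show ?thesis using cnu[of v] by simp
  qed
  have nu_meas: "\<nu> \<in> borel_measurable borel"
  proof (rule borel_measurable_continuous_onI)
    have "\<forall>v. isCont \<nu> v" using nuD has_derivative_continuous by blast
    then show "continuous_on UNIV \<nu>" by (simp add: continuous_at_imp_continuous_on)
  qed
  have kmeas2: "(\<lambda>z. k (fst z) (snd z)) \<in> borel_measurable (borel \<Otimes>\<^sub>M borel)"
    using kmeas by (simp add: borel_prod case_prod_beta')
  have kvm[measurable]: "(\<lambda>w. k v w) \<in> borel_measurable borel" for v
    using measurable_Pair2[OF kmeas2, of v] by simp
  define \<beta> where "\<beta> = (1 - \<rho>) / 4"
  define d where "d = \<beta> - \<alpha>\<^sup>2 / (4 * \<beta>)"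
  have b0: "0 < \<beta>" using r1 by (simp add: \<beta>_def)
  have d0: "0 < d"
  proof -
    have "\<alpha> < 2 * \<beta>" using ar by (simp add: \<beta>_def)
    then have "\<alpha> * \<alpha> < (2 * \<beta>) * (2 * \<beta>)" using a0 by (intro mult_strict_mono) auto
    then have "\<alpha>\<^sup>2 / (4 * \<beta>) < \<beta>" using b0 by (simp add: power2_eq_square divide_less_eq)
    then show ?thesis by (simp add: d_def)
  qed
  define IP where "IP = (\<integral>\<^sup>+t. ennreal (Phi d t) \<partial>lborel)"
  have IPf: "IP ^ 3 < \<infinity>" using Phi_int_fin[OF d0] by (simp add: IP_def power_less_top_ennreal)
  define P3 where "P3 = enn2real (IP ^ 3)"
  have P3: "IP ^ 3 = ennreal P3" "0 \<le> P3" using IPf by (auto simp: P3_def less_top)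
  define K1 where "K1 = Ck * P3"
  define K2 where "K2 = Ck * (3 * P3)"
  have K0: "0 \<le> K1" "0 \<le> K2" using Ck P3 by (auto simp: K1_def K2_def)
  have KB1: "(\<integral>\<^sup>+w. ennreal (\<bar>k v w\<bar> * exp (- \<alpha> * (norm w)\<^sup>2)) \<partial>lborel) \<le> ennreal (K1 * exp (- \<alpha> * (norm v)\<^sup>2))" for v
  proof -
    have "(\<integral>\<^sup>+w. ennreal (\<bar>k v w\<bar> * exp (- \<alpha> * (norm w)\<^sup>2)) \<partial>lborel) \<le> ennreal (Ck * exp (- \<alpha> * (norm v)\<^sup>2)) * IP ^ 3"
      unfolding IP_def by (rule KE1[OF a0 r1 ar \<beta>_def d_def less_imp_le[OF d0] g1 Ck hk]) 
    also have "\<dots> = ennreal (K1 * exp (- \<alpha> * (norm v)\<^sup>2))"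
      using P3 Ck by (simp add: K1_def ennreal_mult[symmetric] mult_ac)
    finally show ?thesis .
  qed
  have KB2: "(\<integral>\<^sup>+w. ennreal (\<bar>k v w\<bar> * (exp (- \<alpha> * (norm w)\<^sup>2) * norm w powr (-1))) \<partial>lborel) \<le> ennreal (K2 * exp (- \<alpha> * (norm v)\<^sup>2))" for v
  proof -
    have "(\<integral>\<^sup>+w. ennreal (\<bar>k v w\<bar> * (exp (- \<alpha> * (norm w)\<^sup>2) * norm w powr (-1))) \<partial>lborel) \<le> ennreal (Ck * exp (- \<alpha> * (norm v)\<^sup>2)) * (3 * IP ^ 3)"
      unfolding IP_def by (rule KE2[OF a0 r1 ar \<beta>_def d_def less_imp_le[OF d0] g1 Ck hk]) 
    also have "\<dots> = ennreal (Ck * exp (- \<alpha> * (norm v)\<^sup>2)) * ennreal (3 * P3)"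
      using P3 by (simp add: ennreal_mult)
    also have "\<dots> = ennreal (Ck * exp (- \<alpha> * (norm v)\<^sup>2) * (3 * P3))"
      using P3 Ck by (simp add: ennreal_mult)
    also have "\<dots> = ennreal (K2 * exp (- \<alpha> * (norm v)\<^sup>2))"
      by (simp add: K2_def mult_ac)
    finally show ?thesis .
  qed
  define C where "C = K1 * K2 / c"
  show ?thesis
  proof (intro exI[of _ C] conjI allI impI)
    show "0 \<le> C" using K0 c by (simp add: C_def)
  next
    fix \<Omega> :: "vec3 set" and h :: "vec3 \<Rightarrow> vec3 \<Rightarrow> real"
    assume H: "open \<Omega> \<and> connected \<Omega> \<and> \<Omega> \<noteq> {} \<and> bounded \<Omega> \<and>
           set_borel_measurable lborel (\<Omega> \<times> UNIV) (\<lambda>(x, v). h x v) \<and>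
           wnorm \<Omega> \<alpha> h < \<infinity>"
    have op: "open \<Omega>" and bd: "bounded \<Omega>" and hsm: "set_borel_measurable lborel (\<Omega> \<times> UNIV) (\<lambda>(x, v). h x v)"
      and wf: "wnorm \<Omega> \<alpha> h < \<infinity>" using H by auto
    define d0 where "d0 = diameter \<Omega>"
    have d00: "0 \<le> d0" using bd by (simp add: d0_def diameter_ge_0)
    define f1 where "f1 = S_op \<Omega> \<nu> (Kop k h)"
    define f2 where "f2 = S_op \<Omega> \<nu> (Kop k f1)"
    define R where "R = \<Omega> \<times> (UNIV :: vec3 set)"
    have Rs: "R \<in> sets borel" using op by (auto simp: R_def intro!: borel_open open_Times)
    have Rs': "R \<inter> space lborel \<in> sets lborel" using Rs by simp
    have hm: "(\<lambda>z. restr \<Omega> h (fst z) (snd z)) \<in> borel_measurable (borel \<Otimes>\<^sub>M borel)"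
    proof -
      have "(\<lambda>z. restr \<Omega> h (fst z) (snd z)) = (\<lambda>z. indicator (\<Omega> \<times> UNIV) z *\<^sub>R (\<lambda>(x, v). h x v) z)"
        by (auto simp: restr_def fun_eq_iff indicator_def)
      then show ?thesis using hsm by (simp add: set_borel_measurable_def borel_prod)
    qed
    have f1m: "(\<lambda>z. f1 (fst z) (snd z)) \<in> borel_measurable (borel \<Otimes>\<^sub>M borel)"
      unfolding f1_def by (rule SK_meas[OF op bd nu_meas kmeas2 hm])
    have f2m: "(\<lambda>z. f2 (fst z) (snd z)) \<in> borel_measurable (borel \<Otimes>\<^sub>M borel)"
      unfolding f2_def by (rule SK_meas[OF op bd nu_meas kmeas2 restr_meas[OF op f1m]])
    have FFm: "(\<lambda>(x, v). ereal (exp (\<alpha> * (norm v)\<^sup>2) * \<bar>f2 x v\<bar>)) \<in> borel_measurable (restrict_space lborel R)"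
    proof (rule measurable_restrict_space1)
      have [measurable]: "(\<lambda>z. f2 (fst z) (snd z)) \<in> borel_measurable (borel \<Otimes>\<^sub>M borel)" by (rule f2m)
      have "(\<lambda>z. ereal (exp (\<alpha> * (norm (snd z))\<^sup>2) * \<bar>f2 (fst z) (snd z)\<bar>)) \<in> borel_measurable (borel \<Otimes>\<^sub>M borel)"
        by measurable
      then show "(\<lambda>(x, v). ereal (exp (\<alpha> * (norm v)\<^sup>2) * \<bar>f2 x v\<bar>)) \<in> borel_measurable lborel"
        by (simp add: borel_prod case_prod_beta')
    qed
    have goalAE: "AE z in restrict_space lborel R. (\<lambda>(x, v). ereal (exp (\<alpha> * (norm v)\<^sup>2) * \<bar>f2 x v\<bar>)) z
        \<le> ereal C * ereal d0 * wnorm \<Omega> \<alpha> h"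
    proof -
      have hAE: "AE z in restrict_space lborel R. (\<lambda>(x, v). ereal (exp (\<alpha> * (norm v)\<^sup>2) * \<bar>h x v\<bar>)) z \<le> wnorm \<Omega> \<alpha> h"
        unfolding wnorm_def R_def by (rule esssup_AE)
      show ?thesis
      proof (cases "AE z in restrict_space lborel R. False")
        case True
        then show ?thesis by (rule eventually_mono) simp
      next
        case False
        have nm: "wnorm \<Omega> \<alpha> h \<noteq> - \<infinity>"
        proof
          assume "wnorm \<Omega> \<alpha> h = - \<infinity>"
          with hAE have "AE z in restrict_space lborel R. False" by (rule_tac eventually_mono) auto
          with False show False by simp
        qed
        then obtain M where W: "wnorm \<Omega> \<alpha> h = ereal M" using wf by (cases "wnorm \<Omega> \<alpha> h") auto
        have M0: "0 \<le> M"
        proof (rule ccontr)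
          assume "\<not> 0 \<le> M"
          then have Mn: "M < 0" by simp
          from hAE have "AE z in restrict_space lborel R. False"
          proof (rule eventually_mono)
            fix z :: "vec3 \<times> vec3"
            assume "(\<lambda>(x, v). ereal (exp (\<alpha> * (norm v)\<^sup>2) * \<bar>h x v\<bar>)) z \<le> wnorm \<Omega> \<alpha> h"
            then have "exp (\<alpha> * (norm (snd z))\<^sup>2) * \<bar>h (fst z) (snd z)\<bar> \<le> M" using W by (simp add: case_prod_beta')
            moreover have "0 \<le> exp (\<alpha> * (norm (snd z))\<^sup>2) * \<bar>h (fst z) (snd z)\<bar>" by simp
            ultimately show False using Mn by linarith
          qed
          with False show False by simp
        qed
        have A0: "AE z in lborel. z \<in> R \<longrightarrow> exp (\<alpha> * (norm (snd z))\<^sup>2) * \<bar>h (fst z) (snd z)\<bar> \<le> M"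
          using hAE unfolding AE_restrict_space_iff[OF Rs'] W by (simp add: case_prod_beta')
        have A1: "AE z in lborel. fst z \<in> \<Omega> \<longrightarrow> \<bar>h (fst z) (snd z)\<bar> \<le> M * exp (- (\<alpha> * (norm (snd z))\<^sup>2))"
          using A0 by (rule eventually_mono) (auto simp: R_def mem_Times_iff intro: exp_div_bound)
        have A2: "AE x in lborel. AE w in lborel. x \<in> \<Omega> \<longrightarrow> \<bar>h x w\<bar> \<le> M * exp (- (\<alpha> * (norm w)\<^sup>2))"
        proof -
          have "AE z in (lborel :: vec3 measure) \<Otimes>\<^sub>M (lborel :: vec3 measure). fst z \<in> \<Omega> \<longrightarrow> \<bar>h (fst z) (snd z)\<bar> \<le> M * exp (- (\<alpha> * (norm (snd z))\<^sup>2))"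
            using A1 by (simp only: lborel_prod)
          from pair_sigma_finite.AE_pair[OF psf this] show ?thesis by simp
        qed
        have G1: "AE x in lborel. x \<in> \<Omega> \<longrightarrow> (\<forall>v. \<bar>Kop k h x v\<bar> \<le> M * (K1 * exp (- \<alpha> * (norm v)\<^sup>2)))"
          using A2
        proof (rule eventually_mono)
          fix x assume ax: "AE w in lborel. x \<in> \<Omega> \<longrightarrow> \<bar>h x w\<bar> \<le> M * exp (- (\<alpha> * (norm w)\<^sup>2))"
          show "x \<in> \<Omega> \<longrightarrow> (\<forall>v. \<bar>Kop k h x v\<bar> \<le> M * (K1 * exp (- \<alpha> * (norm v)\<^sup>2)))"
          proof (intro impI allI)
            fix v assume x: "x \<in> \<Omega>"
            have aw: "AE w in lborel. \<bar>h x w\<bar> \<le> M * exp (- \<alpha> * (norm w)\<^sup>2)" using ax x by simp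
            have mm: "(\<lambda>w. ennreal (\<bar>k v w\<bar> * exp (- \<alpha> * (norm w)\<^sup>2))) \<in> borel_measurable lborel" by measurable
            show "\<bar>Kop k h x v\<bar> \<le> M * (K1 * exp (- \<alpha> * (norm v)\<^sup>2))"
              unfolding Kop_def using K_step[where k=k and v=v and F="h x" and \<omega>="\<lambda>w. exp (- \<alpha> * (norm w)\<^sup>2)", OF aw M0 _ mm KB1[of v]] K0 by simp
          qed
        qed
        from G1 obtain N1 where N1: "{x \<in> space lborel. \<not> (x \<in> \<Omega> \<longrightarrow> (\<forall>v. \<bar>Kop k h x v\<bar> \<le> M * (K1 * exp (- \<alpha> * (norm v)\<^sup>2))))} \<subseteq> N1"
          "emeasure lborel N1 = 0" "N1 \<in> sets lborel" by (rule AE_E)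
        have N1n: "N1 \<in> null_sets lborel" using N1 by auto
        have F1: "AE z in lborel. fst z \<in> \<Omega> \<longrightarrow> snd z \<noteq> 0 \<longrightarrow>
            \<bar>f1 (fst z) (snd z)\<bar> \<le> (M * K1 * d0) * (exp (- \<alpha> * (norm (snd z))\<^sup>2) * norm (snd z) powr (-1))"
          using line_AE[OF N1n]
        proof (rule eventually_mono)
          fix z :: "vec3 \<times> vec3" assume az: "AE s in lborel. fst z - s *\<^sub>R snd z \<notin> N1"
          obtain x v where z: "z = (x, v)" by fastforce
          show "fst z \<in> \<Omega> \<longrightarrow> snd z \<noteq> 0 \<longrightarrow>
            \<bar>f1 (fst z) (snd z)\<bar> \<le> (M * K1 * d0) * (exp (- \<alpha> * (norm (snd z))\<^sup>2) * norm (snd z) powr (-1))"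
          proof (intro impI)
            assume x: "fst z \<in> \<Omega>" and v: "snd z \<noteq> 0"
            then have x: "x \<in> \<Omega>" and v: "v \<noteq> 0" using z by auto
            define B1 where "B1 = M * (K1 * exp (- \<alpha> * (norm v)\<^sup>2))"
            have B1: "0 \<le> B1" using M0 K0 by (simp add: B1_def)
            have tn: "0 \<le> tau \<Omega> x v" by (rule tau_nonneg[OF op bd v])
            have AEs: "AE s in lborel. 0 \<le> s \<and> s < tau \<Omega> x v \<longrightarrow> \<bar>Kop k h (x - s *\<^sub>R v) v\<bar> \<le> B1"
              using az
            proof (rule eventually_mono)
              fix s assume ns: "fst z - s *\<^sub>R snd z \<notin> N1"
              show "0 \<le> s \<and> s < tau \<Omega> x v \<longrightarrow> \<bar>Kop k h (x - s *\<^sub>R v) v\<bar> \<le> B1"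
              proof
                assume s: "0 \<le> s \<and> s < tau \<Omega> x v"
                have y: "x - s *\<^sub>R v \<in> \<Omega>" by (rule tau_inside) (use s in auto)
                have "x - s *\<^sub>R v \<notin> N1" using ns z by simp
                then have "x - s *\<^sub>R v \<in> \<Omega> \<longrightarrow> (\<forall>v'. \<bar>Kop k h (x - s *\<^sub>R v) v'\<bar> \<le> M * (K1 * exp (- \<alpha> * (norm v')\<^sup>2)))"
                  using N1(1) by auto
                then show "\<bar>Kop k h (x - s *\<^sub>R v) v\<bar> \<le> B1" using y by (simp add: B1_def)
              qed
            qed
            have nup: "0 < \<nu> v" using nu_ge[of v] c by linarith
            have "\<bar>f1 x v\<bar> \<le> B1 * min (tau \<Omega> x v) (1 / \<nu> v)"
              unfolding f1_def by (rule S_step[where g="Kop k h" and \<Omega>=\<Omega> and \<nu>=\<nu> and x=x and v=v, OF tn nup B1 AEs])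
            also have "\<dots> \<le> B1 * (d0 * norm v powr (-1))"
            proof (rule mult_left_mono[OF _ B1])
              have "tau \<Omega> x v * norm v \<le> d0" using tau_bound[OF op bd v x] by (simp add: d0_def)
              then have "tau \<Omega> x v \<le> d0 / norm v" using v by (simp add: le_divide_eq)
              then show "min (tau \<Omega> x v) (1 / \<nu> v) \<le> d0 * norm v powr (-1)" by simp
            qed
            finally show "\<bar>f1 (fst z) (snd z)\<bar> \<le> (M * K1 * d0) * (exp (- \<alpha> * (norm (snd z))\<^sup>2) * norm (snd z) powr (-1))"
              using z by (simp add: B1_def mult_ac)
          qed
        qed
        have A3: "AE x in lborel. AE w in lborel. x \<in> \<Omega> \<longrightarrow> w \<noteq> 0 \<longrightarrow>
            \<bar>f1 x w\<bar> \<le> (M * K1 * d0) * (exp (- \<alpha> * (norm w)\<^sup>2) * norm w powr (-1))"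
        proof -
          have "AE z in (lborel :: vec3 measure) \<Otimes>\<^sub>M (lborel :: vec3 measure). fst z \<in> \<Omega> \<longrightarrow> snd z \<noteq> 0 \<longrightarrow>
            \<bar>f1 (fst z) (snd z)\<bar> \<le> (M * K1 * d0) * (exp (- \<alpha> * (norm (snd z))\<^sup>2) * norm (snd z) powr (-1))"
            using F1 by (simp only: lborel_prod)
          from pair_sigma_finite.AE_pair[OF psf this] show ?thesis by simp
        qed
        have BB: "0 \<le> M * K1 * d0" using M0 K0 d00 by simp
        have G2: "AE x in lborel. x \<in> \<Omega> \<longrightarrow> (\<forall>v. \<bar>Kop k f1 x v\<bar> \<le> (M * K1 * d0) * (K2 * exp (- \<alpha> * (norm v)\<^sup>2)))"
          using A3
        proof (rule eventually_mono)
          fix x assume ax: "AE w in lborel. x \<in> \<Omega> \<longrightarrow> w \<noteq> 0 \<longrightarrow>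
            \<bar>f1 x w\<bar> \<le> (M * K1 * d0) * (exp (- \<alpha> * (norm w)\<^sup>2) * norm w powr (-1))"
          show "x \<in> \<Omega> \<longrightarrow> (\<forall>v. \<bar>Kop k f1 x v\<bar> \<le> (M * K1 * d0) * (K2 * exp (- \<alpha> * (norm v)\<^sup>2)))"
          proof (intro impI allI)
            fix v assume x: "x \<in> \<Omega>"
            have aw: "AE w in lborel. \<bar>f1 x w\<bar> \<le> (M * K1 * d0) * (exp (- \<alpha> * (norm w)\<^sup>2) * norm w powr (-1))"
              using ax AE_lborel_singleton[of "0::vec3"]
            proof eventually_elim
              case (elim w) then show ?case using x by auto
            qed
            have mm: "(\<lambda>w. ennreal (\<bar>k v w\<bar> * (exp (- \<alpha> * (norm w)\<^sup>2) * norm w powr (-1)))) \<in> borel_measurable lborel"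
              by measurable
            show "\<bar>Kop k f1 x v\<bar> \<le> (M * K1 * d0) * (K2 * exp (- \<alpha> * (norm v)\<^sup>2))"
              unfolding Kop_def using K_step[where k=k and v=v and F="f1 x" and \<omega>="\<lambda>w. exp (- \<alpha> * (norm w)\<^sup>2) * norm w powr (-1)", OF aw BB _ mm KB2[of v]] K0
              by simp
          qed
        qed
        from G2 obtain N2 where N2: "{x \<in> space lborel. \<not> (x \<in> \<Omega> \<longrightarrow> (\<forall>v. \<bar>Kop k f1 x v\<bar> \<le> (M * K1 * d0) * (K2 * exp (- \<alpha> * (norm v)\<^sup>2))))} \<subseteq> N2"
          "emeasure lborel N2 = 0" "N2 \<in> sets lborel" by (rule AE_E)
        have N2n: "N2 \<in> null_sets lborel" using N2 by auto
        have F2: "AE z in lborel. fst z \<in> \<Omega> \<longrightarrow> snd z \<noteq> 0 \<longrightarrow>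
            \<bar>f2 (fst z) (snd z)\<bar> \<le> (C * d0 * M) * exp (- (\<alpha> * (norm (snd z))\<^sup>2))"
          using line_AE[OF N2n]
        proof (rule eventually_mono)
          fix z :: "vec3 \<times> vec3" assume az: "AE s in lborel. fst z - s *\<^sub>R snd z \<notin> N2"
          obtain x v where z: "z = (x, v)" by fastforce
          show "fst z \<in> \<Omega> \<longrightarrow> snd z \<noteq> 0 \<longrightarrow>
            \<bar>f2 (fst z) (snd z)\<bar> \<le> (C * d0 * M) * exp (- (\<alpha> * (norm (snd z))\<^sup>2))"
          proof (intro impI)
            assume x: "fst z \<in> \<Omega>" and v: "snd z \<noteq> 0"
            then have x: "x \<in> \<Omega>" and v: "v \<noteq> 0" using z by auto
            define B2 where "B2 = (M * K1 * d0) * (K2 * exp (- \<alpha> * (norm v)\<^sup>2))"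
            have B2: "0 \<le> B2" using BB K0 by (simp add: B2_def)
            have tn: "0 \<le> tau \<Omega> x v" by (rule tau_nonneg[OF op bd v])
            have AEs: "AE s in lborel. 0 \<le> s \<and> s < tau \<Omega> x v \<longrightarrow> \<bar>Kop k f1 (x - s *\<^sub>R v) v\<bar> \<le> B2"
              using az
            proof (rule eventually_mono)
              fix s assume ns: "fst z - s *\<^sub>R snd z \<notin> N2"
              show "0 \<le> s \<and> s < tau \<Omega> x v \<longrightarrow> \<bar>Kop k f1 (x - s *\<^sub>R v) v\<bar> \<le> B2"
              proof
                assume s: "0 \<le> s \<and> s < tau \<Omega> x v"
                have y: "x - s *\<^sub>R v \<in> \<Omega>" by (rule tau_inside) (use s in auto)
                have "x - s *\<^sub>R v \<notin> N2" using ns z by simp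
                then have "x - s *\<^sub>R v \<in> \<Omega> \<longrightarrow> (\<forall>v'. \<bar>Kop k f1 (x - s *\<^sub>R v) v'\<bar> \<le> (M * K1 * d0) * (K2 * exp (- \<alpha> * (norm v')\<^sup>2)))"
                  using N2(1) by auto
                then show "\<bar>Kop k f1 (x - s *\<^sub>R v) v\<bar> \<le> B2" using y by (simp add: B2_def)
              qed
            qed
            have nup: "0 < \<nu> v" using nu_ge[of v] c by linarith
            have "\<bar>f2 x v\<bar> \<le> B2 * min (tau \<Omega> x v) (1 / \<nu> v)"
              unfolding f2_def by (rule S_step[where g="Kop k f1" and \<Omega>=\<Omega> and \<nu>=\<nu> and x=x and v=v, OF tn nup B2 AEs])
            also have "\<dots> \<le> B2 * (1 / c)"
            proof (rule mult_left_mono[OF _ B2])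
              have "1 / \<nu> v \<le> 1 / c" using nu_ge[of v] c by (intro divide_left_mono) auto
              then show "min (tau \<Omega> x v) (1 / \<nu> v) \<le> 1 / c" by simp
            qed
            also have "\<dots> = (C * d0 * M) * exp (- (\<alpha> * (norm v)\<^sup>2))"
              using c by (simp add: B2_def C_def field_simps)
            finally show "\<bar>f2 (fst z) (snd z)\<bar> \<le> (C * d0 * M) * exp (- (\<alpha> * (norm (snd z))\<^sup>2))"
              using z by simp
          qed
        qed
        show ?thesis
          unfolding AE_restrict_space_iff[OF Rs'] using F2 AE_snd_nz
        proof eventually_elim
          case (elim z)
          show ?case
          proof
            assume zR: "z \<in> R"
            then have "fst z \<in> \<Omega>" by (auto simp: R_def mem_Times_iff)
            then have "\<bar>f2 (fst z) (snd z)\<bar> \<le> (C * d0 * M) * exp (- (\<alpha> * (norm (snd z))\<^sup>2))" using elim by auto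
            then have "exp (\<alpha> * (norm (snd z))\<^sup>2) * \<bar>f2 (fst z) (snd z)\<bar> \<le> C * d0 * M" by (rule exp_mul_bound)
            then show "(case z of (x, v) \<Rightarrow> ereal (exp (\<alpha> * (norm v)\<^sup>2) * \<bar>f2 x v\<bar>)) \<le> ereal C * ereal d0 * wnorm \<Omega> \<alpha> h"
              by (simp add: W case_prod_beta')
          qed
        qed
      qed
    qed

    have "wnorm \<Omega> \<alpha> f2 \<le> ereal C * ereal d0 * wnorm \<Omega> \<alpha> h"
    proof -
      have "wnorm \<Omega> \<alpha> f2 = esssup (restrict_space lborel R) (\<lambda>(x, v). ereal (exp (\<alpha> * (norm v)\<^sup>2) * \<bar>f2 x v\<bar>))"
        by (simp add: wnorm_def R_def)
      also have "\<dots> \<le> ereal C * ereal d0 * wnorm \<Omega> \<alpha> h" using FFm goalAE by (rule esssup_I)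
      finally show ?thesis .
    qed
    then show "wnorm \<Omega> \<alpha> (S_op \<Omega> \<nu> (Kop k (S_op \<Omega> \<nu> (Kop k h)))) \<le> ereal C * ereal (diameter \<Omega>) * wnorm \<Omega> \<alpha> h"
      by (simp add: f2_def f1_def d0_def)

  qed
qed


end
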